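(* Let $A$ be a finite set. The map $F:R^+(A)\to R(A)$, $F(\overset{x}{<},\overset{y}{<})=(\overset{x}{<},\overset{y}{<}\setminus\overset{x}{<})$, is an order-preserving map $(R^+(A),\subseteq)\to(R(A),\sqsubseteq)$; the map $G$ from the barycentric subdivision $\mathrm{sd}(R(A),\sqsubseteq)$ to $(R^+(A),\subseteq)$ sending a chain $\overset{*}{<}_0\sqsubsetneq\overset{*}{<}_1\sqsubsetneq\dots\sqsubsetneq\overset{*}{<}_r$ to $(\overset{x}{<}_r,\overset{y}{<}_0)$ is order-preserving; and the maps $|F|:|(R^+(A),\subseteq)|\to|(R(A),\sqsubseteq)|$ and the composite \[ |(R(A),\sqsubseteq)|\cong|\mathrm{sd}(R(A),\sqsubseteq)|\xrightarrow{|G|}|(R^+(A),\subseteq)| \] (the first map being the standard homeomorphism of a poset's realization with that of its barycentric subdivision) are mutually inverse $\Sigma_A$-equivariant homotopy equivalences.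
   Context: A strict partial order is a transitive irreflexive relation; it is semi-linear if it is induced by a surjection $h:A\to\{1,\dots,l\}$ (i.e. $a<b$ iff $h(a)<h(b)$). For strict partial orders $<_1,<_2$, $<_1\bar\cup<_2$ denotes the transitive closure of their union, and $a(<_1\setminus<_2)b$ means $a<_1b$ and neither $a<_2b$ nor $b<_2a$. A double order on $A$ is a pair $\overset{*}{<}=(\overset{x}{<},\overset{y}{<})$ of strict partial orders on $A$ such that for all $a\ne b$ at least one of $a\overset{x}{<}b$, $b\overset{x}{<}a$, $a\overset{y}{<}b$, $b\overset{y}{<}a$ holds. It is regular if $\overset{x}{<}$ is semi-linear and $a\overset{x}{<}b$ implies neither $a\overset{y}{<}b$ nor $b\overset{y}{<}a$. A double order is semi-regular if it equals the componentwise union $\bar\cup$ of finitely many regular double orders. $R(A)$, $R^+(A)$ are the sets of regular, resp. semi-regular double orders. Partial orders on double orders: $\overset{*}{<}_1\subseteq\overset{*}{<}_2$ iff $\overset{x}{<}_1\subseteq\overset{x}{<}_2$ and $\overset{y}{<}_1\subseteq\overset{y}{<}_2$; $\overset{*}{<}_1\sqsubseteq\overset{*}{<}_2$ iff $\overset{x}{<}_1\subseteq\overset{x}{<}_2$ and $\overset{y}{<}_1\supseteq\overset{y}{<}_2$. The barycentric subdivision $\mathrm{sd}(P)$ of a poset $P$ is the poset of finite nonempty chains in $P$ ordered by inclusion; $|P|$ is the realization of the nerve. $\Sigma_A$ acts on double orders by $(\overset{x}{<},\overset{y}{<})\sigma=(\overset{x}{<}\sigma,\overset{y}{<}\sigma)$,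 $a(\overset{x}{<}\sigma)b$ iff $\sigma(a)\overset{x}{<}\sigma(b)$ (similarly for $y$). *)

theory Defs
  imports "HOL-Analysis.Analysis" "HOL-Combinatorics.Permutations"
begin

type_synonym 'a dord = "'a rel \<times> 'a rel"

definition spo :: "'a set \<Rightarrow> 'a rel \<Rightarrow> bool" where
  "spo A r \<longleftrightarrow> r \<subseteq> A \<times> A \<and> irrefl r \<and> trans r"

definition semilinear :: "'a set \<Rightarrow> 'a rel \<Rightarrow> bool" where
  "semilinear A r \<longleftrightarrow> (\<exists>(h::'a \<Rightarrow> nat) l. h ` A = {1..l} \<and>
      r = {(a,b). a \<in> A \<and> b \<in> A \<and> h a < h b})"

definition double_order :: "'a set \<Rightarrow> 'a dord \<Rightarrow> bool" where
  "double_order A d \<longleftrightarrow> spo A (fst d) \<and> spo A (snd d) \<and>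
     (\<forall>a\<in>A. \<forall>b\<in>A. a \<noteq> b \<longrightarrow>
        (a,b) \<in> fst d \<or> (b,a) \<in> fst d \<or> (a,b) \<in> snd d \<or> (b,a) \<in> snd d)"

definition regular :: "'a set \<Rightarrow> 'a dord \<Rightarrow> bool" where
  "regular A d \<longleftrightarrow> double_order A d \<and> semilinear A (fst d) \<and>
     (\<forall>a b. (a,b) \<in> fst d \<longrightarrow> (a,b) \<notin> snd d \<and> (b,a) \<notin> snd d)"

definition Reg :: "'a set \<Rightarrow> 'a dord set" where
  "Reg A = {d. regular A d}"

definition SemiReg :: "'a set \<Rightarrow> 'a dord set" where
  "SemiReg A = {d. double_order A d \<and>
     (\<exists>S. finite S \<and> S \<noteq> {} \<and> S \<subseteq> Reg A \<and>
          d = (trancl (\<Union>(fst ` S)), trancl (\<Union>(snd ` S))))}"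

text \<open>r1 \ r2 : pairs of r1 incomparable in r2.\<close>
definition rdiff :: "'a rel \<Rightarrow> 'a rel \<Rightarrow> 'a rel" where
  "rdiff r1 r2 = {(a,b). (a,b) \<in> r1 \<and> (a,b) \<notin> r2 \<and> (b,a) \<notin> r2}"

definition dsub :: "'a dord \<Rightarrow> 'a dord \<Rightarrow> bool" where
  "dsub d1 d2 \<longleftrightarrow> fst d1 \<subseteq> fst d2 \<and> snd d1 \<subseteq> snd d2"

definition dsq :: "'a dord \<Rightarrow> 'a dord \<Rightarrow> bool" where
  "dsq d1 d2 \<longleftrightarrow> fst d1 \<subseteq> fst d2 \<and> snd d2 \<subseteq> snd d1"

definition Fmap :: "'a dord \<Rightarrow> 'a dord" where
  "Fmap d = (fst d, rdiff (snd d) (fst d))"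

text \<open>Barycentric subdivision: finite nonempty chains of a poset (P, le).\<close>
definition pchains :: "'b set \<Rightarrow> ('b \<Rightarrow> 'b \<Rightarrow> bool) \<Rightarrow> 'b set set" where
  "pchains P le = {c. c \<subseteq> P \<and> finite c \<and> c \<noteq> {} \<and> (\<forall>p\<in>c. \<forall>q\<in>c. le p q \<or> le q p)}"

definition chain_max :: "('b \<Rightarrow> 'b \<Rightarrow> bool) \<Rightarrow> 'b set \<Rightarrow> 'b" where
  "chain_max le c = (THE m. m \<in> c \<and> (\<forall>p\<in>c. le p m))"

definition chain_min :: "('b \<Rightarrow> 'b \<Rightarrow> bool) \<Rightarrow> 'b set \<Rightarrow> 'b" where
  "chain_min le c = (THE m. m \<in> c \<and> (\<forall>p\<in>c. le m p))"

definition Gmap :: "'a dord set \<Rightarrow> 'a dord" where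
  "Gmap c = (fst (chain_max dsq c), snd (chain_min dsq c))"

text \<open>Geometric realization of the nerve of a finite poset (P, le): the functions
  P -> [0,1] (zero outside P) summing to 1 whose support is a chain, with the
  (product = Euclidean) topology.\<close>
definition realization :: "'b set \<Rightarrow> ('b \<Rightarrow> 'b \<Rightarrow> bool) \<Rightarrow> ('b \<Rightarrow> real) set" where
  "realization P le = {t. (\<forall>p. 0 \<le> t p) \<and> (\<forall>p. p \<notin> P \<longrightarrow> t p = 0) \<and> sum t P = 1 \<and>
       (\<forall>p q. 0 < t p \<and> 0 < t q \<longrightarrow> le p q \<or> le q p)}"

text \<open>Realization |f| of an order-preserving map f on P (affine on simplices).\<close>
definition realize_map :: "'b set \<Rightarrow> ('b \<Rightarrow> 'c) \<Rightarrow> ('b \<Rightarrow> real) \<Rightarrow> ('c \<Rightarrow> real)" where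
  "realize_map P f t = (\<lambda>q. \<Sum>p\<in>{p\<in>P. f p = q}. t p)"

text \<open>Standard homeomorphism |sd P| -> |P|: a vertex (chain c) goes to the barycenter of c.\<close>
definition bary :: "'b set \<Rightarrow> ('b \<Rightarrow> 'b \<Rightarrow> bool) \<Rightarrow> ('b set \<Rightarrow> real) \<Rightarrow> ('b \<Rightarrow> real)" where
  "bary P le t = (\<lambda>p. \<Sum>c\<in>{c\<in>pchains P le. p \<in> c}. t c / real (card c))"

definition act_rel :: "('a \<Rightarrow> 'a) \<Rightarrow> 'a rel \<Rightarrow> 'a rel" where
  "act_rel \<sigma> r = {(a,b). (\<sigma> a, \<sigma> b) \<in> r}"

definition act :: "('a \<Rightarrow> 'a) \<Rightarrow> 'a dord \<Rightarrow> 'a dord" where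
  "act \<sigma> d = (act_rel \<sigma> (fst d), act_rel \<sigma> (snd d))"

definition act_real :: "'a dord set \<Rightarrow> ('a \<Rightarrow> 'a) \<Rightarrow> ('a dord \<Rightarrow> real) \<Rightarrow> ('a dord \<Rightarrow> real)" where
  "act_real P \<sigma> t = realize_map P (act \<sigma>) t"

end

theory Submission
  imports Defs
begin

definition gpo :: "('b \<Rightarrow> 'b \<Rightarrow> bool) \<Rightarrow> bool" where
 "gpo le \<longleftrightarrow> (\<forall>p. le p p) \<and> (\<forall>p q. le p q \<longrightarrow> le q p \<longrightarrow> p = q) \<and>
     (\<forall>p q r. le p q \<longrightarrow> le q r \<longrightarrow> le p r)"

lemma gpo_refl: "gpo le \<Longrightarrow> le p p" by (simp add: gpo_def)
lemma gpo_antisym: "gpo le \<Longrightarrow> le p q \<Longrightarrow> le q p \<Longrightarrow> p = q" by (simp add: gpo_def)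
lemma gpo_trans: "gpo le \<Longrightarrow> le p q \<Longrightarrow> le q r \<Longrightarrow> le p r" unfolding gpo_def by blast

lemma gpo_subset: "gpo ((\<subseteq>) :: 'b set \<Rightarrow> 'b set \<Rightarrow> bool)" by (auto simp: gpo_def)
lemma gpo_dsub: "gpo dsub" by (auto simp: gpo_def dsub_def prod_eq_iff)
lemma gpo_dsq: "gpo dsq" by (auto simp: gpo_def dsq_def prod_eq_iff)

lemma realizationD:
  assumes "t \<in> realization P le"
  shows "0 \<le> t p" "p \<notin> P \<Longrightarrow> t p = 0" "sum t P = 1"
    "0 < t p \<Longrightarrow> 0 < t q \<Longrightarrow> le p q \<or> le q p"
  using assms by (auto simp: realization_def)

lemma realization_pos_in: "t \<in> realization P le \<Longrightarrow> 0 < t p \<Longrightarrow> p \<in> P"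
  using realizationD(2) by force

lemma cont_fun_iff:
  "continuous_map X euclidean (h :: 'x \<Rightarrow> 'c \<Rightarrow> real) \<longleftrightarrow>
     (\<forall>q. continuous_map X euclideanreal (\<lambda>x. h x q))"
proof -
  have "continuous_map X euclidean h = continuous_map X (product_topology (\<lambda>_. euclidean) UNIV) h"
    by (simp add: euclidean_product_topology)
  then show ?thesis by (simp add: continuous_map_componentwise_UNIV)
qed

lemma cont_proj: "continuous_map X euclidean h \<Longrightarrow>
    continuous_map X euclideanreal (\<lambda>x. (h x :: 'c \<Rightarrow> real) q)"
  using cont_fun_iff by (metis (no_types))

lemma cont_into:
  "continuous_map X (top_of_set S) (h :: 'x \<Rightarrow> 'c \<Rightarrow> real) \<longleftrightarrow>
     (\<forall>q. continuous_map X euclideanreal (\<lambda>x. h x q)) \<and> (\<forall>x\<in>topspace X. h x \<in> S)"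
  by (simp only: continuous_map_in_subtopology cont_fun_iff Pi_iff)

lemma finite_pchains0: "finite P \<Longrightarrow> finite (pchains P le)"
  by (rule finite_subset[of _ "Pow P"]) (auto simp: pchains_def)

lemma cont_rm:
  assumes "finite P" "continuous_map X euclidean h"
  shows "continuous_map X euclidean (\<lambda>x. realize_map P f (h x))"
proof -
  have "continuous_map X euclideanreal (\<lambda>x. realize_map P f (h x) q)" for q
    unfolding realize_map_def
    by (rule continuous_map_sum) (use assms in \<open>auto intro: cont_proj\<close>)
  then show ?thesis unfolding cont_fun_iff by blast
qed

lemma cont_bary:
  assumes "finite P" "continuous_map X euclidean h"
  shows "continuous_map X euclidean (\<lambda>x. bary P le (h x))"
proof -
  have "continuous_map X euclideanreal (\<lambda>x. bary P le (h x) q)" for q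
    unfolding bary_def
    by (rule continuous_map_sum) (use assms finite_pchains0[OF assms(1)] in
         \<open>auto intro!: cont_proj continuous_map_real_mult_right simp: divide_inverse\<close>)
  then show ?thesis unfolding cont_fun_iff by blast
qed

lemma finite_pchains: "finite P \<Longrightarrow> finite (pchains P le)"
  by (rule finite_subset[of _ "Pow P"]) (auto simp: pchains_def)

lemma rm_nonneg: "(\<And>p. 0 \<le> t p) \<Longrightarrow> 0 \<le> realize_map P f t q"
  by (auto simp: realize_map_def intro: sum_nonneg)

lemma rm_pos: assumes "0 < realize_map P f t q" "\<And>p. 0 \<le> t p" "finite P"
  obtains p where "p \<in> P" "f p = q" "0 < t p"
proof -
  have "\<exists>p\<in>{p\<in>P. f p = q}. t p \<noteq> 0"
    using assms(1) unfolding realize_map_def by (metis (no_types, lifting) less_irrefl sum.neutral)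
  then show ?thesis using that assms(2) by (auto simp: order_less_le)
qed

lemma rm_sum:
  assumes "finite P" "finite Q" "f ` P \<subseteq> Q"
  shows "sum (realize_map P f t) Q = sum t P"
  unfolding realize_map_def using sum.group[OF assms(1,2,3)] by simp

lemma rm_real:
  assumes "finite P" "finite Q" "f ` P \<subseteq> Q"
    and mono: "\<And>p p'. p \<in> P \<Longrightarrow> p' \<in> P \<Longrightarrow> le p p' \<Longrightarrow> le' (f p) (f p')"
    and t: "t \<in> realization P le"
  shows "realize_map P f t \<in> realization Q le'"
proof -
  have nn: "\<And>p. 0 \<le> t p" using realizationD(1)[OF t] .
  have "0 \<le> realize_map P f t q" for q using rm_nonneg[OF nn] .
  moreover have "realize_map P f t q = 0" if "q \<notin> Q" for q
    unfolding realize_map_def using assms(3) that by (intro sum.neutral) auto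
  moreover have "sum (realize_map P f t) Q = 1"
    using rm_sum[OF assms(1-3)] realizationD(3)[OF t] by simp
  moreover have "le' q q' \<or> le' q' q" if h1: "0 < realize_map P f t q" and h2: "0 < realize_map P f t q'" for q q'
  proof -
    obtain p where p: "p \<in> P" "f p = q" "0 < t p" using rm_pos[OF h1 nn assms(1)] by blast
    obtain p' where p': "p' \<in> P" "f p' = q'" "0 < t p'" using rm_pos[OF h2 nn assms(1)] by blast
    show ?thesis using realizationD(4)[OF t p(3) p'(3)] mono p p' by blast
  qed
  ultimately show ?thesis by (auto simp: realization_def)
qed

lemma rm_comp:
  assumes "finite P" "finite Q" "f ` P \<subseteq> Q"
  shows "realize_map Q g (realize_map P f t) = realize_map P (g \<circ> f) t"
proof
  fix r
  have "realize_map Q g (realize_map P f t) r = (\<Sum>q\<in>{q\<in>Q. g q = r}. \<Sum>p\<in>{p\<in>P. f p = q}. t p)"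
    by (simp add: realize_map_def)
  also have "\<dots> = (\<Sum>q\<in>{q\<in>Q. g q = r}. \<Sum>p\<in>{p\<in>{p\<in>P. g (f p) = r}. f p = q}. t p)"
    by (intro sum.cong) auto
  also have "\<dots> = (\<Sum>p\<in>{p\<in>P. g (f p) = r}. t p)"
    by (rule sum.group) (use assms in auto)
  finally show "realize_map Q g (realize_map P f t) r = realize_map P (g \<circ> f) t r"
    by (simp add: realize_map_def)
qed

lemma rm_id: assumes "\<And>p. p \<notin> P \<Longrightarrow> t p = 0" "finite P"
  shows "realize_map P (\<lambda>x. x) t = t"
proof
  fix q
  show "realize_map P (\<lambda>x. x) t q = t q"
  proof (cases "q \<in> P")
    case True
    then have "{p\<in>P. p = q} = {q}" by auto
    then show ?thesis by (simp add: realize_map_def)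
  next
    case False
    then have "{p\<in>P. p = q} = {}" by auto
    then show ?thesis using assms False by (simp add: realize_map_def)
  qed
qed

lemma rm_cong: "(\<And>p. p \<in> P \<Longrightarrow> f p = g p) \<Longrightarrow> realize_map P f t = realize_map P g t"
  unfolding realize_map_def by (intro ext sum.cong) auto

lemma rm_lin: "realize_map P f (\<lambda>q. a * u q + b * v q) =
   (\<lambda>r. a * realize_map P f u r + b * realize_map P f v r)"
  by (auto simp: realize_map_def sum.distrib sum_distrib_left)

lemma rm_supp: "0 < realize_map P f t q \<Longrightarrow> (\<And>p. 0 \<le> t p) \<Longrightarrow> finite P \<Longrightarrow>
   \<exists>p\<in>P. f p = q \<and> 0 < t p"
  by (metis rm_pos)

definition nsup :: "'b set \<Rightarrow> ('b \<Rightarrow> 'b \<Rightarrow> bool) \<Rightarrow> ('b set \<Rightarrow> real) \<Rightarrow> bool" where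
  "nsup P le u \<longleftrightarrow> (\<forall>c. 0 \<le> u c) \<and> (\<forall>c. c \<notin> pchains P le \<longrightarrow> u c = 0) \<and>
     (\<forall>c c'. 0 < u c \<longrightarrow> 0 < u c' \<longrightarrow> c \<subseteq> c' \<or> c' \<subseteq> c)"

lemma pchainsD: "c \<in> pchains P le \<Longrightarrow> c \<subseteq> P \<and> finite c \<and> c \<noteq> {} \<and> (\<forall>p\<in>c. \<forall>q\<in>c. le p q \<or> le q p)"
  by (simp add: pchains_def)

lemma pchains_card: "c \<in> pchains P le \<Longrightarrow> 0 < card c"
  by (simp add: pchains_def card_gt_0_iff)

lemma realization_nsup: "u \<in> realization (pchains P le) (\<subseteq>) \<Longrightarrow> nsup P le u"
  by (auto simp: realization_def nsup_def)

lemma sum_bary: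
  assumes "finite P" "\<And>c. c \<notin> pchains P le \<Longrightarrow> u c = 0"
  shows "sum (bary P le u) P = sum u (pchains P le)"
proof -
  have fin: "finite (pchains P le)" by (rule finite_pchains0[OF assms(1)])
  have "sum (bary P le u) P = (\<Sum>p\<in>P. \<Sum>c\<in>pchains P le. if p \<in> c then u c / real (card c) else 0)"
    unfolding bary_def by (rule sum.cong[OF refl]) (simp add: sum.inter_filter[OF fin])
  also have "\<dots> = (\<Sum>c\<in>pchains P le. \<Sum>p\<in>P. if p \<in> c then u c / real (card c) else 0)"
    by (rule sum.swap)
  also have "\<dots> = (\<Sum>c\<in>pchains P le. u c)"
  proof (intro sum.cong refl)
    fix c assume c: "c \<in> pchains P le"
    have "(\<Sum>p\<in>P. if p \<in> c then u c / real (card c) else 0) = (\<Sum>p\<in>c. u c / real (card c))"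
    proof -
      have "{p \<in> P. p \<in> c} = c" using pchainsD[OF c] by blast
      then show ?thesis using sum.inter_filter[OF assms(1), of "\<lambda>_. u c / real (card c)" "\<lambda>p. p \<in> c"]
        by simp
    qed
    also have "\<dots> = u c" using pchains_card[OF c] by simp
    finally show "(\<Sum>p\<in>P. if p \<in> c then u c / real (card c) else 0) = u c" .
  qed
  finally show ?thesis .
qed

lemma bary_ge:
  assumes "finite P" "\<And>c. 0 \<le> u c" "c \<in> pchains P le" "p \<in> c"
  shows "u c / real (card c) \<le> bary P le u p"
  unfolding bary_def
  by (rule member_le_sum) (use assms finite_pchains0[OF assms(1)] in auto)

lemma bary_nonneg: "(\<And>c. 0 \<le> u c) \<Longrightarrow> 0 \<le> bary P le u p"
  unfolding bary_def by (intro sum_nonneg) auto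

lemma bary_pos:
  assumes "0 < bary P le u p" "finite P"
  shows "\<exists>c\<in>pchains P le. p \<in> c \<and> u c \<noteq> 0"
proof (rule ccontr)
  assume "\<not> ?thesis"
  then have "bary P le u p = 0" unfolding bary_def by (intro sum.neutral) auto
  with assms show False by simp
qed

lemma bary_real:
  assumes "finite P" "u \<in> realization (pchains P le) (\<subseteq>)"
  shows "bary P le u \<in> realization P le"
proof -
  have nn: "\<And>c. 0 \<le> u c" using realizationD(1)[OF assms(2)] .
  have z: "\<And>c. c \<notin> pchains P le \<Longrightarrow> u c = 0" using realizationD(2)[OF assms(2)] .
  have "0 \<le> bary P le u p" for p by (rule bary_nonneg[OF nn])
  moreover have "bary P le u p = 0" if "p \<notin> P" for p
    unfolding bary_def using that by (intro sum.neutral) (auto simp: pchains_def)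
  moreover have "sum (bary P le u) P = 1"
    using sum_bary[OF assms(1) z] realizationD(3)[OF assms(2)] by simp
  moreover have "le p q \<or> le q p" if h1: "0 < bary P le u p" and h2: "0 < bary P le u q" for p q
  proof -
    obtain c where c: "c \<in> pchains P le" "p \<in> c" "u c \<noteq> 0" using bary_pos[OF h1 assms(1)] by blast
    obtain c' where c': "c' \<in> pchains P le" "q \<in> c'" "u c' \<noteq> 0" using bary_pos[OF h2 assms(1)] by blast
    have "c \<subseteq> c' \<or> c' \<subseteq> c"
      using realizationD(4)[OF assms(2), of c c'] c c' nn by (simp add: order_less_le)
    then show ?thesis using c c' pchainsD by blast
  qed
  ultimately show ?thesis by (auto simp: realization_def)
qed

lemma nested_union_mem:
  assumes "finite S" "S \<noteq> {}" "\<And>c c'. c \<in> S \<Longrightarrow> c' \<in> S \<Longrightarrow> c \<subseteq> c' \<or> c' \<subseteq> c"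
  shows "\<Union>S \<in> S"
  using assms
proof (induction S rule: finite_ne_induct)
  case (singleton x) then show ?case by simp
next
  case (insert x F)
  then have "\<Union>F \<in> F" by blast
  then have "x \<subseteq> \<Union>F \<or> \<Union>F \<subseteq> x" using insert.prems by blast
  then show ?case using \<open>\<Union>F \<in> F\<close> by (auto simp: Un_absorb1 Un_absorb2)
qed

lemma bary_upd:
  assumes "finite P" "M \<in> pchains P le"
  shows "bary P le (u(M := a)) p = bary P le u p + (if p \<in> M then (a - u M) / real (card M) else 0)"
proof -
  have fin: "finite {c \<in> pchains P le. p \<in> c}" using finite_pchains0[OF assms(1)] by simp
  show ?thesis
  proof (cases "p \<in> M")
    case True
    then have M: "M \<in> {c \<in> pchains P le. p \<in> c}" using assms by simp
    show ?thesis unfolding bary_def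
      using sum.remove[OF fin M, of "\<lambda>c. (u(M := a)) c / real (card c)"]
        sum.remove[OF fin M, of "\<lambda>c. u c / real (card c)"] True
      by (simp add: diff_divide_distrib)
  next
    case False
    then show ?thesis unfolding bary_def by (simp, intro sum.cong refl) auto
  qed
qed

lemma bary_zero: "bary P le (\<lambda>_. 0) = (\<lambda>_. 0)"
  by (simp add: bary_def fun_eq_iff)

lemma nsup_zero_if:
  assumes "nsup P le u" "{c \<in> pchains P le. 0 < u c} = {}"
  shows "u = (\<lambda>_. 0)"
proof
  fix c
  show "u c = 0" using assms unfolding nsup_def
    by (metis (mono_tags, lifting) empty_Collect_eq order_less_le)
qed

lemma supp_bary:
  assumes "finite P" "nsup P le v"
  shows "0 < bary P le v p \<longleftrightarrow> p \<in> \<Union>{c \<in> pchains P le. 0 < v c}"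
proof
  assume "0 < bary P le v p"
  then obtain c where c: "c \<in> pchains P le" "p \<in> c" "v c \<noteq> 0" using bary_pos[OF _ assms(1)] by blast
  moreover have "0 \<le> v c" using assms(2) by (simp add: nsup_def)
  ultimately have "0 < v c" by simp
  then show "p \<in> \<Union>{c \<in> pchains P le. 0 < v c}" using c by blast
next
  assume "p \<in> \<Union>{c \<in> pchains P le. 0 < v c}"
  then obtain c where c: "c \<in> pchains P le" "p \<in> c" "0 < v c" by blast
  have "0 < v c / real (card c)" using c pchains_card[OF c(1)] by simp
  also have "\<dots> \<le> bary P le v p" by (rule bary_ge) (use assms c in \<open>simp_all add: nsup_def\<close>)
  finally show "0 < bary P le v p" .
qed

lemma bary_attain:
  assumes "finite P" and v: "nsup P le v" and Mv: "M = \<Union>{c \<in> pchains P le. 0 < v c}"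
     "M \<in> {c \<in> pchains P le. 0 < v c}"
  shows "\<exists>p0\<in>M. bary P le v p0 = v M / real (card M)"
proof -
  let ?T = "{c \<in> pchains P le. 0 < v c}"
  have fin: "finite (pchains P le)" by (rule finite_pchains0[OF assms(1)])
  have nestv: "\<And>c c'. c \<in> ?T \<Longrightarrow> c' \<in> ?T \<Longrightarrow> c \<subseteq> c' \<or> c' \<subseteq> c"
    using v by (auto simp: nsup_def)
  obtain p0 where p0: "p0 \<in> M" "\<And>c. c \<in> ?T \<Longrightarrow> c \<noteq> M \<Longrightarrow> p0 \<notin> c"
  proof (cases "?T - {M} = {}")
    case True
    obtain p where "p \<in> M" using Mv(2) pchainsD by blast
    then show ?thesis using that True by blast
  next
    case False
    have "\<Union>(?T - {M}) \<in> ?T - {M}"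
      by (rule nested_union_mem) (use fin False nestv in auto)
    moreover have "\<Union>(?T - {M}) \<subseteq> M" using Mv(1) by blast
    ultimately obtain p where "p \<in> M" "p \<notin> \<Union>(?T - {M})" by blast
    then show ?thesis using that by blast
  qed
  have finM: "finite {c \<in> pchains P le. p0 \<in> c}" using fin by simp
  have Min: "M \<in> {c \<in> pchains P le. p0 \<in> c}" using Mv(2) p0 by simp
  have "bary P le v p0 = v M / real (card M) + (\<Sum>c\<in>{c \<in> pchains P le. p0 \<in> c} - {M}. v c / real (card c))"
    unfolding bary_def by (rule sum.remove[OF finM Min])
  also have "(\<Sum>c\<in>{c \<in> pchains P le. p0 \<in> c} - {M}. v c / real (card c)) = 0"
  proof (rule sum.neutral, intro ballI)
    fix c assume "c \<in> {c \<in> pchains P le. p0 \<in> c} - {M}"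
    then have c: "c \<in> pchains P le" "p0 \<in> c" "c \<noteq> M" by auto
    then have "\<not> 0 < v c" using p0(2) by blast
    moreover have "0 \<le> v c" using v by (simp add: nsup_def)
    ultimately have "v c = 0" by simp
    then show "v c / real (card c) = 0" by simp
  qed
  finally show ?thesis using p0 by auto
qed

lemma bary_inj_aux:
  assumes "finite P"
  shows "nsup P le u \<Longrightarrow> nsup P le u' \<Longrightarrow> bary P le u = bary P le u' \<Longrightarrow> u = u'"
proof (induction "card {c \<in> pchains P le. 0 < u c}" arbitrary: u u' rule: less_induct)
  case less
  let ?S = "{c \<in> pchains P le. 0 < u c}"
  let ?S' = "{c \<in> pchains P le. 0 < u' c}"
  have fin: "finite (pchains P le)" by (rule finite_pchains0[OF assms])
  have finS: "finite ?S" "finite ?S'" using fin by auto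
  have nest: "\<And>c c'. c \<in> ?S \<Longrightarrow> c' \<in> ?S \<Longrightarrow> c \<subseteq> c' \<or> c' \<subseteq> c"
     "\<And>c c'. c \<in> ?S' \<Longrightarrow> c' \<in> ?S' \<Longrightarrow> c \<subseteq> c' \<or> c' \<subseteq> c"
    using less.prems(1,2) unfolding nsup_def by blast+
  note supp = supp_bary[OF assms]
  show ?case
  proof (cases "?S = {}")
    case True
    then have u0: "u = (\<lambda>_. 0)" by (rule nsup_zero_if[OF less.prems(1)])
    have "?S' = {}"
    proof (rule ccontr)
      assume "?S' \<noteq> {}"
      then obtain c where c: "c \<in> pchains P le" "0 < u' c" by blast
      then obtain p where "p \<in> c" using pchainsD by blast
      then have "0 < bary P le u' p" using supp[OF less.prems(2)] c by blast
      then show False using less.prems(3) u0 bary_zero by (metis less_irrefl)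
    qed
    then have "u' = (\<lambda>_. 0)" by (rule nsup_zero_if[OF less.prems(2)])
    then show ?thesis using u0 by simp
  next
    case False
    define M where "M = \<Union>?S"
    have MS: "M \<in> ?S" unfolding M_def by (rule nested_union_mem[OF finS(1) False nest(1)])
    have S'ne: "?S' \<noteq> {}"
    proof
      assume "?S' = {}"
      then have "u' = (\<lambda>_. 0)" by (rule nsup_zero_if[OF less.prems(2)])
      moreover obtain p where "p \<in> M" using MS pchainsD by blast
      then have "0 < bary P le u p" using supp[OF less.prems(1)] MS by blast
      ultimately show False using less.prems(3) bary_zero by (metis less_irrefl)
    qed
    define M' where "M' = \<Union>?S'"
    have MS': "M' \<in> ?S'" unfolding M'_def by (rule nested_union_mem[OF finS(2) S'ne nest(2)])
    have "p \<in> M \<longleftrightarrow> p \<in> M'" for p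
      using supp[OF less.prems(1), of p] supp[OF less.prems(2), of p] less.prems(3)
      unfolding M_def M'_def by simp
    then have MM: "M = M'" by blast
    have lowb: "v M / real (card M) \<le> bary P le v p" if "nsup P le v" "p \<in> M" for v p
      by (rule bary_ge) (use assms that MS in \<open>simp_all add: nsup_def\<close>)
    obtain p0 where p0: "p0 \<in> M" "bary P le u p0 = u M / real (card M)"
      using bary_attain[OF assms less.prems(1) M_def MS] by blast
    obtain p1 where p1: "p1 \<in> M" "bary P le u' p1 = u' M / real (card M)"
      using bary_attain[OF assms less.prems(2) M'_def MS'] MM by blast
    have cM: "0 < real (card M)" using pchains_card[of M P le] MS by simp
    have "u M / real (card M) \<le> u' M / real (card M)"
      using lowb[OF less.prems(1) p1(1)] p1(2) less.prems(3) by simp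
    moreover have "u' M / real (card M) \<le> u M / real (card M)"
      using lowb[OF less.prems(2) p0(1)] p0(2) less.prems(3) by simp
    ultimately have eqM: "u M = u' M" using cM by (simp add: divide_le_cancel)
    define v where "v = u(M := 0)"
    define v' where "v' = u'(M := 0)"
    have nv: "nsup P le v" "nsup P le v'"
      using less.prems(1,2) unfolding v_def v'_def nsup_def by auto
    have Mch: "M \<in> pchains P le" using MS by simp
    have "bary P le v p = bary P le v' p" for p
      using bary_upd[OF assms Mch, of u 0 p] bary_upd[OF assms Mch, of u' 0 p] less.prems(3) eqM
      unfolding v_def v'_def by simp
    then have bv: "bary P le v = bary P le v'" by blast
    have cl: "card {c \<in> pchains P le. 0 < v c} < card ?S"
    proof -
      have eq: "{c \<in> pchains P le. 0 < v c} = ?S - {M}" unfolding v_def by auto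
      show ?thesis by (subst eq) (rule card_Diff1_less[OF finS(1) MS])
    qed
    have vv: "v = v'" using less.hyps[OF cl nv bv] .
    show ?thesis
    proof
      fix c
      show "u c = u' c"
      proof (cases "c = M")
        case True then show ?thesis using eqM by simp
      next
        case False then show ?thesis using fun_cong[OF vv, of c] unfolding v_def v'_def by simp
      qed
    qed
  qed
qed

lemma bary_surj_aux:
  assumes "finite P"
  shows "(\<forall>p. 0 \<le> s p) \<Longrightarrow> (\<forall>p. p \<notin> P \<longrightarrow> s p = 0) \<Longrightarrow>
    (\<forall>p q. 0 < s p \<longrightarrow> 0 < s q \<longrightarrow> le p q \<or> le q p) \<Longrightarrow> \<exists>u. nsup P le u \<and> bary P le u = s"
proof (induction "card {p \<in> P. 0 < s p}" arbitrary: s rule: less_induct)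
  case less
  define C where "C = {p \<in> P. 0 < s p}"
  show ?case
  proof (cases "C = {}")
    case True
    then have "s = (\<lambda>_. 0)" using less.prems unfolding C_def by (force simp: fun_eq_iff order_less_le)
    moreover have "nsup P le (\<lambda>_. 0)" by (simp add: nsup_def)
    ultimately show ?thesis using bary_zero[of P le] by auto
  next
    case False
    have finC: "finite C" using assms unfolding C_def by simp
    have Cch: "C \<in> pchains P le" using False finC less.prems(3) unfolding C_def pchains_def by auto
    define m where "m = Min (s ` C)"
    have mC: "m \<in> s ` C" unfolding m_def using finC False by simp
    then obtain p1 where p1: "p1 \<in> C" "s p1 = m" by auto
    have mle: "m \<le> s p" if "p \<in> C" for p unfolding m_def using finC that by simp
    have mpos: "0 < m" using p1 unfolding C_def by auto
    define s' where "s' = (\<lambda>p. if p \<in> C then s p - m else s p)"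
    have s'nn: "\<forall>p. 0 \<le> s' p" using less.prems(1) mle unfolding s'_def by auto
    have s'z: "\<forall>p. p \<notin> P \<longrightarrow> s' p = 0" using less.prems(2) unfolding s'_def C_def by auto
    have s'supp: "0 < s' p \<Longrightarrow> p \<in> C" for p
      using less.prems(1,2) unfolding s'_def C_def by (auto split: if_splits)
    have s'le: "s' p \<le> s p" for p using mpos unfolding s'_def by auto
    have s'ch: "\<forall>p q. 0 < s' p \<longrightarrow> 0 < s' q \<longrightarrow> le p q \<or> le q p"
      using less.prems(3) s'le by (meson less_le_trans)
    have s'p1: "s' p1 = 0" using p1 unfolding s'_def by simp
    have sub: "{p \<in> P. 0 < s' p} \<subseteq> C - {p1}" using s'supp s'p1 by force
    have "card {p \<in> P. 0 < s' p} < card C"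
      using card_mono[OF _ sub] finC p1(1) card_Diff1_less[OF finC p1(1)] by simp
    then obtain u' where u': "nsup P le u'" "bary P le u' = s'"
      using less.hyps[OF _ s'nn s'z s'ch] unfolding C_def by blast
    have u'C: "u' c = 0" if "c = C" for c
    proof (rule ccontr)
      assume "u' c \<noteq> 0"
      then have "0 < u' C" using u'(1) that by (simp add: nsup_def order_less_le)
      then have "\<forall>p\<in>C. 0 < s' p" using supp_bary[OF assms u'(1)] u'(2) Cch by blast
      then show False using p1 s'p1 by auto
    qed
    define u where "u = u'(C := m * real (card C))"
    have sub2: "c \<subseteq> C" if "0 < u' c" for c
    proof
      fix p assume pc: "p \<in> c"
      have cS: "c \<in> pchains P le" using that u'(1) unfolding nsup_def by (metis less_irrefl)
      have "p \<in> \<Union>{c \<in> pchains P le. 0 < u' c}" using cS that pc by blast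
      then have "0 < bary P le u' p" by (simp only: supp_bary[OF assms u'(1)])
      then have "0 < s' p" using u'(2) by simp
      then show "p \<in> C" using s'supp by blast
    qed
    have u'nn: "0 \<le> u' c" for c using u'(1) by (simp add: nsup_def)
    have "nsup P le u"
      unfolding nsup_def
    proof (intro conjI allI impI)
      fix c show "0 \<le> u c" unfolding u_def using u'nn mpos by simp
    next
      fix c assume "c \<notin> pchains P le"
      then show "u c = 0" using Cch u'(1) unfolding u_def nsup_def by auto
    next
      fix c c' assume h: "0 < u c" "0 < u c'"
      show "c \<subseteq> c' \<or> c' \<subseteq> c"
      proof (cases "c = C")
        case True
        then show ?thesis
        proof (cases "c' = C")
          case False then have "0 < u' c'" using h unfolding u_def by simp
          then show ?thesis using sub2 True by blast
        qed simp
      next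
        case False
        then have hc: "0 < u' c" using h unfolding u_def by simp
        show ?thesis
        proof (cases "c' = C")
          case True then show ?thesis using sub2[OF hc] by blast
        next
          case False then have "0 < u' c'" using h unfolding u_def by simp
          then show ?thesis using hc u'(1) unfolding nsup_def by blast
        qed
      qed
    qed
    moreover have "bary P le u = s"
    proof
      fix p
      have "bary P le u p = s' p + (if p \<in> C then (m * real (card C) - 0) / real (card C) else 0)"
        unfolding u_def using bary_upd[OF assms Cch, of u' "m * real (card C)" p] u'(2) u'C by simp
      also have "\<dots> = s p" using pchains_card[OF Cch] unfolding s'_def by auto
      finally show "bary P le u p = s p" .
    qed
    ultimately show ?thesis by blast
  qed
qed

lemma realization_alt: "realization P le = {t. (\<forall>p. 0 \<le> t p) \<and> (\<forall>p. p \<notin> P \<longrightarrow> t p = 0) \<and> sum t P = 1 \<and>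
   (\<forall>p q. \<not> (le p q \<or> le q p) \<longrightarrow> t p \<le> 0 \<or> t q \<le> 0)}"
  unfolding realization_def by (auto simp: not_less) (meson not_le)+

lemma open_const: "open {x. c}" by (cases c) auto

lemma realization_closed: "closed (realization P le)"
  unfolding realization_alt
  by (intro closed_Collect_conj closed_Collect_all closed_Collect_imp closed_Collect_disj
        closed_Collect_le closed_Collect_eq open_const continuous_intros continuous_on_product_coordinates)

lemma realization_compact:
  assumes "finite P"
  shows "compact (realization P le)"
proof -
  define K where "K = PiE UNIV (\<lambda>p. if p \<in> P then {0..1::real} else {0})"
  have "compactin (product_topology (\<lambda>_. euclidean) UNIV) K"
    unfolding K_def compactin_PiE by (auto simp: compactin_euclidean_iff)
  then have cK: "compact K" by (simp add: euclidean_product_topology compactin_euclidean_iff)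
  have "realization P le \<subseteq> K"
  proof
    fix t assume t: "t \<in> realization P le"
    have "t p \<le> 1" if "p \<in> P" for p
      using sum_nonneg_leq_bound[OF assms, of t 1 p] realizationD[OF t] that by auto
    then show "t \<in> K" unfolding K_def using realizationD[OF t] by (auto simp: PiE_iff)
  qed
  then have "realization P le = K \<inter> realization P le" by blast
  then show ?thesis using compact_Int_closed[OF cK realization_closed] by metis
qed

lemma hausdorff_fun: "Hausdorff_space (top_of_set (S :: ('b \<Rightarrow> real) set))"
proof -
  have "Hausdorff_space (product_topology (\<lambda>_::'b. euclideanreal) UNIV)"
    by (simp add: Hausdorff_space_product_topology)
  then have "Hausdorff_space (euclidean :: ('b \<Rightarrow> real) topology)"
    by (simp add: euclidean_product_topology)
  then show ?thesis by (rule Hausdorff_space_subtopology)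
qed

lemma bary_image:
  assumes "finite P"
  shows "bary P le ` realization (pchains P le) (\<subseteq>) = realization P le"
proof
  show "bary P le ` realization (pchains P le) (\<subseteq>) \<subseteq> realization P le"
    using bary_real[OF assms] by blast
next
  show "realization P le \<subseteq> bary P le ` realization (pchains P le) (\<subseteq>)"
  proof
    fix s assume s: "s \<in> realization P le"
    obtain u where u: "nsup P le u" "bary P le u = s"
      using bary_surj_aux[OF assms, of s le] realizationD[OF s] by blast
    have "sum u (pchains P le) = 1"
      using sum_bary[OF assms, of le u] u realizationD(3)[OF s] by (simp add: nsup_def)
    then have "u \<in> realization (pchains P le) (\<subseteq>)"
      using u(1) unfolding nsup_def realization_def by auto
    then show "s \<in> bary P le ` realization (pchains P le) (\<subseteq>)" using u(2) by blast
  qed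
qed

lemma bary_inj:
  assumes "finite P"
  shows "inj_on (bary P le) (realization (pchains P le) (\<subseteq>))"
  using bary_inj_aux[OF assms] realization_nsup unfolding inj_on_def by blast

lemma bary_homeo:
  assumes "finite P"
  shows "homeomorphic_map (top_of_set (realization (pchains P le) (\<subseteq>))) (top_of_set (realization P le)) (bary P le)"
proof -
  have cont: "continuous_map (top_of_set (realization (pchains P le) (\<subseteq>))) (top_of_set (realization P le)) (bary P le)"
  proof -
    have "continuous_map (top_of_set (realization (pchains P le) (\<subseteq>))) euclidean (\<lambda>x. bary P le (id x))"
      by (rule cont_bary[OF assms]) (simp add: continuous_map_from_subtopology)
    then show ?thesis
      using bary_real[OF assms] by (auto simp: continuous_map_in_subtopology)
  qed
  have cs: "compact_space (top_of_set (realization (pchains P le) (\<subseteq>)))"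
    using realization_compact[OF finite_pchains0[OF assms]]
    by (simp add: compact_space_subtopology compactin_euclidean_iff)
  have kc: "kc_space (top_of_set (realization P le))"
    by (rule Hausdorff_imp_kc_space[OF hausdorff_fun])
  show ?thesis
    by (rule bijective_closed_imp_homeomorphic_map[OF cont continuous_imp_closed_map_gen[OF cs kc cont]])
      (use bary_image[OF assms] bary_inj[OF assms] in auto)
qed

definition ibary :: "'b set \<Rightarrow> ('b \<Rightarrow> 'b \<Rightarrow> bool) \<Rightarrow> ('b \<Rightarrow> real) \<Rightarrow> ('b set \<Rightarrow> real)" where
  "ibary P le = inv_into (realization (pchains P le) (\<subseteq>)) (bary P le)"

lemma ibary_in:
  assumes "finite P" "s \<in> realization P le"
  shows "ibary P le s \<in> realization (pchains P le) (\<subseteq>)" "bary P le (ibary P le s) = s"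
  unfolding ibary_def using bary_image[OF assms(1), of le] assms(2)
  by (metis inv_into_into, metis f_inv_into_f)

lemma ibary_bary:
  assumes "finite P" "u \<in> realization (pchains P le) (\<subseteq>)"
  shows "ibary P le (bary P le u) = u"
  unfolding ibary_def using bary_inj[OF assms(1)] assms(2) by (simp add: inv_into_f_f)

lemma ibary_cont:
  assumes "finite P"
  shows "continuous_map (top_of_set (realization P le)) (top_of_set (realization (pchains P le) (\<subseteq>))) (ibary P le)"
proof -
  obtain g where g: "homeomorphic_maps (top_of_set (realization (pchains P le) (\<subseteq>))) (top_of_set (realization P le)) (bary P le) g"
    using bary_homeo[OF assms] homeomorphic_map_maps by blast
  have cg: "continuous_map (top_of_set (realization P le)) (top_of_set (realization (pchains P le) (\<subseteq>))) g"
    using g by (simp add: homeomorphic_maps_def)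
  show ?thesis
  proof (rule continuous_map_eq[OF cg])
    fix y assume y: "y \<in> topspace (top_of_set (realization P le))"
    then have gy: "g y \<in> realization (pchains P le) (\<subseteq>)" "bary P le (g y) = y"
      using g unfolding homeomorphic_maps_def by (auto dest: continuous_map_image_subset_topspace)
    show "g y = ibary P le y" using ibary_bary[OF assms gy(1)] gy(2) by simp
  qed
qed

lemma cproj: "continuous_map (prod_topology A (top_of_set (S::('b\<Rightarrow>real) set))) euclideanreal (\<lambda>y. snd y p)"
proof -
  have c: "continuous_map (top_of_set S) euclideanreal (\<lambda>t. t p)"
    by (rule cont_proj[of "top_of_set S" "\<lambda>x. x" p, OF continuous_map_from_subtopology[OF continuous_map_id, unfolded id_def]])
  show ?thesis using continuous_map_compose[OF continuous_map_snd c] by (simp only: o_def)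
qed

lemma cfst: "continuous_map (prod_topology (top_of_set (T::real set)) B) euclideanreal fst"
  by (rule continuous_map_into_fulltopology[OF continuous_map_fst])

lemma csnd_map:
  assumes "continuous_map X (top_of_set S) (f :: 'x \<Rightarrow> 'c \<Rightarrow> real)"
  shows "continuous_map (prod_topology A X) euclideanreal (\<lambda>y. f (snd y) q)"
proof -
  have c: "continuous_map X euclideanreal (\<lambda>x. f x q)"
    by (rule cont_proj[OF continuous_map_into_fulltopology[OF assms]])
  show ?thesis using continuous_map_compose[OF continuous_map_snd c] by (simp only: o_def)
qed

lemma real_convex:
  assumes a: "a \<in> realization Q le" and b: "b \<in> realization Q le" and s: "0 \<le> s" "s \<le> 1"
    and ch: "\<And>q q'. (0 < a q \<or> 0 < b q) \<Longrightarrow> (0 < a q' \<or> 0 < b q') \<Longrightarrow> le q q' \<or> le q' q"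
  shows "(\<lambda>q. (1 - s) * a q + s * b q) \<in> realization Q le"
proof -
  have nn: "0 \<le> (1 - s) * a q + s * b q" for q
    using realizationD(1)[OF a, of q] realizationD(1)[OF b, of q] s by simp
  have pos: "0 < a q \<or> 0 < b q" if "0 < (1 - s) * a q + s * b q" for q
  proof (rule ccontr)
    assume "\<not> ?thesis"
    then have "a q = 0" "b q = 0" using realizationD(1)[OF a, of q] realizationD(1)[OF b, of q] by auto
    then show False using that by simp
  qed
  have "sum (\<lambda>q. (1 - s) * a q + s * b q) Q = (1 - s) * sum a Q + s * sum b Q"
    by (simp add: sum.distrib sum_distrib_left)
  also have "\<dots> = 1" using realizationD(3)[OF a] realizationD(3)[OF b] by simp
  finally show ?thesis
    unfolding realization_def using nn pos ch realizationD(2)[OF a] realizationD(2)[OF b] by auto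
qed

lemma lin_htpy:
  assumes cf: "continuous_map X (top_of_set (realization Q le)) f"
      and cg: "continuous_map X (top_of_set (realization Q le)) g"
      and ch: "\<And>x q q'. x \<in> topspace X \<Longrightarrow> (0 < f x q \<or> 0 < g x q) \<Longrightarrow> (0 < f x q' \<or> 0 < g x q') \<Longrightarrow> le q q' \<or> le q' q"
      and Pr: "\<And>s. s \<in> {0..1} \<Longrightarrow> Pr (\<lambda>x q. (1 - s) * f x q + s * g x q)"
  shows "homotopic_with Pr X (top_of_set (realization Q le)) f g"
  unfolding homotopic_with_def
proof (intro exI conjI allI ballI)
  let ?h = "\<lambda>y. \<lambda>q. (1 - fst y) * f (snd y) q + fst y * g (snd y) q"
  show "continuous_map (prod_topology (top_of_set {0..1}) X) (top_of_set (realization Q le)) ?h"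
    unfolding cont_into
  proof (intro conjI allI ballI)
    fix q
    show "continuous_map (prod_topology (top_of_set {0..1}) X) euclideanreal
        (\<lambda>y. (1 - fst y) * f (snd y) q + fst y * g (snd y) q)"
      by (intro continuous_map_add continuous_map_real_mult continuous_map_diff continuous_map_const[THEN iffD2]
          cfst csnd_map[OF cf] csnd_map[OF cg]) simp
  next
    fix y assume "y \<in> topspace (prod_topology (top_of_set {0..1::real}) X)"
    then have y: "fst y \<in> {0..1}" "snd y \<in> topspace X" by (auto simp: topspace_prod_topology)
    have fa: "f (snd y) \<in> realization Q le" "g (snd y) \<in> realization Q le"
      using continuous_map_image_subset_topspace[OF cf] continuous_map_image_subset_topspace[OF cg] y(2)
      by auto
    show "?h y \<in> realization Q le"
      by (rule real_convex[OF fa]) (use y ch in auto)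
  qed
next
  fix x show "(\<lambda>q. (1 - fst (0::real, x)) * f (snd (0::real, x)) q + fst (0::real, x) * g (snd (0::real, x)) q) = f x"
    by simp
next
  fix x show "(\<lambda>q. (1 - fst (1::real, x)) * f (snd (1::real, x)) q + fst (1::real, x) * g (snd (1::real, x)) q) = g x"
    by simp
next
  fix s :: real assume "s \<in> {0..1}"
  then show "Pr (\<lambda>x. (\<lambda>q. (1 - fst (s, x)) * f (snd (s, x)) q + fst (s, x) * g (snd (s, x)) q))"
    using Pr by simp
qed

definition abv :: "'b set \<Rightarrow> ('b \<Rightarrow> 'b \<Rightarrow> bool) \<Rightarrow> ('b \<Rightarrow> real) \<Rightarrow> 'b \<Rightarrow> real" where
  "abv P le t p = sum t {q \<in> P. q \<noteq> p \<and> le p q}"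
definition alf :: "'b set \<Rightarrow> ('b \<Rightarrow> 'b \<Rightarrow> bool) \<Rightarrow> real \<Rightarrow> ('b \<Rightarrow> real) \<Rightarrow> 'b \<Rightarrow> real" where
  "alf P le s t p = min (t p) (max 0 (s - abv P le t p))"
definition sweep :: "'b set \<Rightarrow> ('b \<Rightarrow> 'b \<Rightarrow> bool) \<Rightarrow> ('b \<Rightarrow> 'c) \<Rightarrow> ('b \<Rightarrow> 'c) \<Rightarrow> real \<Rightarrow> ('b \<Rightarrow> real) \<Rightarrow> ('c \<Rightarrow> real)" where
  "sweep P le f g s t = (\<lambda>r. realize_map P g (alf P le s t) r + realize_map P f (\<lambda>p. t p - alf P le s t p) r)"

lemma alf_bounds: "0 \<le> t p \<Longrightarrow> 0 \<le> alf P le s t p \<and> alf P le s t p \<le> t p"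
  by (auto simp: alf_def)

lemma abv_nonneg: "(\<And>p. 0 \<le> t p) \<Longrightarrow> 0 \<le> abv P le t p"
  unfolding abv_def by (rule sum_nonneg) auto

lemma rm_cong_arg: "(\<And>p. p \<in> P \<Longrightarrow> a p = b p) \<Longrightarrow> realize_map P f a = realize_map P f b"
  unfolding realize_map_def by (intro ext sum.cong) auto

lemma abv_step:
  assumes "finite P" "gpo le" "\<And>q. 0 \<le> t q" "p' \<in> P" "le p p'" "p \<noteq> p'"
  shows "abv P le t p' + t p' \<le> abv P le t p"
proof -
  let ?A = "{q \<in> P. q \<noteq> p' \<and> le p' q}"
  let ?B = "{q \<in> P. q \<noteq> p \<and> le p q}"
  have sub: "insert p' ?A \<subseteq> ?B"
  proof
    fix q assume q: "q \<in> insert p' ?A"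
    show "q \<in> ?B"
    proof (cases "q = p'")
      case True then show ?thesis using assms by auto
    next
      case False
      then have "q \<in> P" "le p' q" using q by auto
      moreover have "le p q" using gpo_trans[OF assms(2) assms(5) \<open>le p' q\<close>] .
      moreover have "q \<noteq> p"
      proof
        assume "q = p"
        then have "p = p'" using gpo_antisym[OF assms(2) assms(5)] \<open>le p' q\<close> by simp
        then show False using assms(6) by simp
      qed
      ultimately show ?thesis by simp
    qed
  qed
  have finB: "finite ?B" using assms(1) by simp
  have "abv P le t p' + t p' = sum t (insert p' ?A)"
    unfolding abv_def using assms(1) by (simp add: sum.insert add.commute)
  also have "\<dots> \<le> sum t ?B" by (rule sum_mono2[OF finB sub]) (use assms(3) in auto)
  finally show ?thesis unfolding abv_def .
qed

lemma alf_key: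
  assumes "finite P" "gpo le" "\<And>q. 0 \<le> t q" "p' \<in> P" "le p p'" "p \<noteq> p'"
    and pos: "0 < alf P le s t p"
  shows "alf P le s t p' = t p'"
proof -
  have "0 < s - abv P le t p" using pos by (auto simp: alf_def)
  moreover have "abv P le t p' + t p' \<le> abv P le t p" by (rule abv_step[OF assms(1-6)])
  ultimately have "t p' \<le> s - abv P le t p'" by simp
  then show ?thesis using assms(3)[of p'] by (auto simp: alf_def)
qed

lemma sweep_real:
  assumes finP: "finite P" and finQ: "finite Q" and gp: "gpo le" and gq: "gpo le'"
    and fP: "f ` P \<subseteq> Q" and gP: "g ` P \<subseteq> Q"
    and fm: "\<And>p p'. p \<in> P \<Longrightarrow> p' \<in> P \<Longrightarrow> le p p' \<Longrightarrow> le' (f p) (f p')"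
    and gm: "\<And>p p'. p \<in> P \<Longrightarrow> p' \<in> P \<Longrightarrow> le p p' \<Longrightarrow> le' (g p) (g p')"
    and fg: "\<And>p. p \<in> P \<Longrightarrow> le' (f p) (g p)"
    and t: "t \<in> realization P le"
  shows "sweep P le f g s t \<in> realization Q le'"
proof -
  have tn: "\<And>p. 0 \<le> t p" using realizationD(1)[OF t] .
  let ?a = "alf P le s t"
  let ?b = "\<lambda>p. t p - alf P le s t p"
  have ab: "0 \<le> ?a p \<and> ?a p \<le> t p" for p using alf_bounds[of t p P le s] tn[of p] by blast
  have an: "\<And>p. 0 \<le> ?a p" and bn: "\<And>p. 0 \<le> ?b p" using ab by auto
  have nn: "0 \<le> sweep P le f g s t r" for r
    unfolding sweep_def using rm_nonneg[of "?a" P g r, OF an] rm_nonneg[of "?b" P f r, OF bn] by simp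
  have z: "sweep P le f g s t r = 0" if "r \<notin> Q" for r
  proof -
    have e: "{p \<in> P. g p = r} = {}" "{p \<in> P. f p = r} = {}" using that fP gP by auto
    show ?thesis unfolding sweep_def realize_map_def e by simp
  qed
  have "sum (sweep P le f g s t) Q = sum ?a P + sum ?b P"
    unfolding sweep_def by (simp add: sum.distrib rm_sum[OF finP finQ gP] rm_sum[OF finP finQ fP])
  also have "\<dots> = sum t P" by (simp add: sum.distrib[symmetric])
  finally have sm: "sum (sweep P le f g s t) Q = 1" using realizationD(3)[OF t] by simp
  have src: "(\<exists>p\<in>P. g p = r \<and> 0 < ?a p) \<or> (\<exists>p\<in>P. f p = r \<and> 0 < ?b p)"
    if "0 < sweep P le f g s t r" for r
  proof -
    have "0 < realize_map P g ?a r \<or> 0 < realize_map P f ?b r"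
      using that rm_nonneg[of "?a" P g r, OF an] rm_nonneg[of "?b" P f r, OF bn] unfolding sweep_def by linarith
    then show ?thesis using rm_supp[of P g "?a" r, OF _ an finP] rm_supp[of P f "?b" r, OF _ bn finP] by blast
  qed
  have tpos_a: "0 < t p" if "0 < ?a p" for p using ab[of p] that by linarith
  have tpos_b: "0 < t p" if "0 < ?b p" for p using ab[of p] that by linarith
  have comp: "le p p' \<or> le p' p" if "0 < t p" "0 < t p'" for p p' using realizationD(4)[OF t that] .
  have mixed: "le' (f p') (g p)" if p: "p \<in> P" "0 < ?a p" and p': "p' \<in> P" "0 < ?b p'" for p p'
  proof (cases "p = p'")
    case True then show ?thesis using fg p by simp
  next
    case False
    have "le p p' \<or> le p' p" using comp[OF tpos_a[OF p(2)] tpos_b[OF p'(2)]] .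
    moreover have "\<not> le p p'"
    proof
      assume "le p p'"
      then have "?a p' = t p'" using alf_key[OF finP gp tn p'(1) _ False p(2)] by simp
      then show False using p'(2) by simp
    qed
    ultimately have "le p' p" by simp
    then show ?thesis using gpo_trans[OF gq fm[OF p'(1) p(1)] fg[OF p(1)]] by simp
  qed
  have ch: "le' r r' \<or> le' r' r" if "0 < sweep P le f g s t r" "0 < sweep P le f g s t r'" for r r'
  proof -
    from src[OF that(1)] src[OF that(2)] show ?thesis
    proof (elim disjE bexE conjE)
      fix p p' assume h: "p \<in> P" "g p = r" "0 < ?a p" "p' \<in> P" "g p' = r'" "0 < ?a p'"
      have "le p p' \<or> le p' p" using comp[OF tpos_a[OF h(3)] tpos_a[OF h(6)]] .
      then show ?thesis using gm[OF h(1) h(4)] gm[OF h(4) h(1)] h(2,5) by blast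
    next
      fix p p' assume h: "p \<in> P" "g p = r" "0 < ?a p" "p' \<in> P" "f p' = r'" "0 < ?b p'"
      show ?thesis using mixed[OF h(1) h(3) h(4) h(6)] h(2,5) by blast
    next
      fix p p' assume h: "p \<in> P" "f p = r" "0 < ?b p" "p' \<in> P" "g p' = r'" "0 < ?a p'"
      show ?thesis using mixed[OF h(4) h(6) h(1) h(3)] h(2,5) by blast
    next
      fix p p' assume h: "p \<in> P" "f p = r" "0 < ?b p" "p' \<in> P" "f p' = r'" "0 < ?b p'"
      have "le p p' \<or> le p' p" using comp[OF tpos_b[OF h(3)] tpos_b[OF h(6)]] .
      then show ?thesis using fm[OF h(1) h(4)] fm[OF h(4) h(1)] h(2,5) by blast
    qed
  qed
  show ?thesis unfolding realization_def mem_Collect_eq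
    by (intro conjI allI impI nn z sm ch) auto
qed

lemma sweep_0:
  assumes "t \<in> realization P le"
  shows "sweep P le f g 0 t = realize_map P f t"
proof -
  have tn: "\<And>p. 0 \<le> t p" using realizationD(1)[OF assms] .
  have "alf P le 0 t p = 0" for p
    using tn[of p] abv_nonneg[of t P le p, OF tn] by (simp add: alf_def)
  then show ?thesis unfolding sweep_def by (simp add: realize_map_def)
qed

lemma sweep_1:
  assumes "finite P" "t \<in> realization P le"
  shows "sweep P le f g 1 t = realize_map P g t"
proof -
  have tn: "\<And>p. 0 \<le> t p" using realizationD(1)[OF assms(2)] .
  have a: "alf P le 1 t p = t p" if "p \<in> P" for p
  proof -
    have "abv P le t p + t p = sum t (insert p {q \<in> P. q \<noteq> p \<and> le p q})"
      unfolding abv_def using assms(1) by (simp add: sum.insert add.commute)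
    also have "\<dots> \<le> sum t P" by (rule sum_mono2) (use assms(1) that tn in auto)
    finally have "t p \<le> 1 - abv P le t p" using realizationD(3)[OF assms(2)] by simp
    then show ?thesis using tn[of p] by (simp add: alf_def)
  qed
  have "realize_map P g (alf P le 1 t) = realize_map P g t" by (rule rm_cong_arg) (simp add: a)
  moreover have "realize_map P f (\<lambda>p. t p - alf P le 1 t p) = realize_map P f (\<lambda>_. 0)"
    by (rule rm_cong_arg) (simp add: a)
  ultimately show ?thesis unfolding sweep_def by (simp add: realize_map_def)
qed

lemma sweep_cont:
  assumes "finite P"
  shows "continuous_map (prod_topology (top_of_set {0..1}) (top_of_set (realization P le))) euclidean
     (\<lambda>y. sweep P le f g (fst y) (snd y))"
  unfolding cont_fun_iff
proof
  fix r
  show "continuous_map (prod_topology (top_of_set {0..1}) (top_of_set (realization P le))) euclideanreal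
     (\<lambda>y. sweep P le f g (fst y) (snd y) r)"
    unfolding sweep_def realize_map_def alf_def abv_def
    by (intro continuous_map_add continuous_map_sum continuous_map_real_min continuous_map_real_max
          continuous_map_diff continuous_map_const[THEN iffD2] cfst cproj)
       (simp_all add: assms)
qed

lemma sweep_htpy:
  assumes finP: "finite P" and finQ: "finite Q" and gp: "gpo le" and gq: "gpo le'"
    and fP: "f ` P \<subseteq> Q" and gP: "g ` P \<subseteq> Q"
    and fm: "\<And>p p'. p \<in> P \<Longrightarrow> p' \<in> P \<Longrightarrow> le p p' \<Longrightarrow> le' (f p) (f p')"
    and gm: "\<And>p p'. p \<in> P \<Longrightarrow> p' \<in> P \<Longrightarrow> le p p' \<Longrightarrow> le' (g p) (g p')"
    and fg: "\<And>p. p \<in> P \<Longrightarrow> le' (f p) (g p)"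
    and loc: "\<And>h k. (\<And>x. x \<in> realization P le \<Longrightarrow> h x = k x) \<Longrightarrow> (Pr h \<longleftrightarrow> Pr k)"
    and Pr: "\<And>s. s \<in> {0..1} \<Longrightarrow> Pr (sweep P le f g s)"
  shows "homotopic_with Pr (top_of_set (realization P le)) (top_of_set (realization Q le'))
      (realize_map P f) (realize_map P g)"
proof -
  have loc': "Pr h \<longleftrightarrow> Pr k" if a: "\<And>x. x \<in> topspace (top_of_set (realization P le)) \<Longrightarrow> h x = k x" for h k
  proof (rule loc)
    fix x assume "x \<in> realization P le"
    then show "h x = k x" using a by simp
  qed
  have sr: "sweep P le f g s t \<in> realization Q le'" if "t \<in> realization P le" for s t
    by (rule sweep_real[OF finP finQ gp gq fP gP fm gm fg that])
  let ?H = "\<lambda>y. sweep P le f g (fst y) (snd y)"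
  have c1: "continuous_map (prod_topology (top_of_set {0..1}) (top_of_set (realization P le)))
       (top_of_set (realization Q le')) ?H"
    unfolding continuous_map_in_subtopology
  proof
    show "continuous_map (prod_topology (top_of_set {0..1}) (top_of_set (realization P le))) euclidean ?H"
      by (rule sweep_cont[OF finP])
    show "?H \<in> topspace (prod_topology (top_of_set {0..1}) (top_of_set (realization P le)))
         \<rightarrow> realization Q le'"
      using sr by (auto simp: topspace_prod_topology)
  qed
  have c2: "\<forall>x\<in>topspace (top_of_set (realization P le)). ?H (0, x) = realize_map P f x"
    using sweep_0[of _ P le f g] by simp
  have c3: "\<forall>x\<in>topspace (top_of_set (realization P le)). ?H (1, x) = realize_map P g x"
    using sweep_1[OF finP, of _ le f g] by simp
  have c4: "\<forall>s\<in>{0..1}. Pr (\<lambda>x. ?H (s, x))" using Pr by simp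
  show ?thesis
    using homotopic_with[where P=Pr and X="top_of_set (realization P le)", OF loc']
      c1 c2 c3 c4 by blast
qed

lemma chain_has_max:
  assumes "gpo le" "finite c" "c \<noteq> {}" "\<forall>p\<in>c. \<forall>q\<in>c. le p q \<or> le q p"
  shows "\<exists>m\<in>c. \<forall>p\<in>c. le p m"
  using assms(2,3,4)
proof (induction c rule: finite_ne_induct)
  case (singleton x) then show ?case using gpo_refl[OF assms(1)] by auto
next
  case (insert x F)
  then obtain m where m: "m \<in> F" "\<forall>p\<in>F. le p m" by auto
  show ?case
  proof (cases "le x m")
    case True then show ?thesis using m by auto
  next
    case False
    then have "le m x" using insert.prems m(1) by auto
    then show ?thesis using m gpo_refl[OF assms(1)] gpo_trans[OF assms(1)] by blast
  qed
qed

lemma chain_has_min: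
  assumes "gpo le" "finite c" "c \<noteq> {}" "\<forall>p\<in>c. \<forall>q\<in>c. le p q \<or> le q p"
  shows "\<exists>m\<in>c. \<forall>p\<in>c. le m p"
proof -
  have g: "gpo (\<lambda>x y. le y x)" using assms(1) unfolding gpo_def by blast
  show ?thesis using chain_has_max[OF g assms(2,3)] assms(4) by blast
qed

lemma chain_max_eq: "gpo le \<Longrightarrow> m \<in> c \<Longrightarrow> \<forall>p\<in>c. le p m \<Longrightarrow> chain_max le c = m"
  unfolding chain_max_def by (rule the_equality) (auto dest: gpo_antisym)

lemma chain_min_eq: "gpo le \<Longrightarrow> m \<in> c \<Longrightarrow> \<forall>p\<in>c. le m p \<Longrightarrow> chain_min le c = m"
  unfolding chain_min_def by (rule the_equality) (auto dest: gpo_antisym)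

lemma chain_max:
  assumes "gpo le" "c \<in> pchains P le"
  shows "chain_max le c \<in> c" "\<And>p. p \<in> c \<Longrightarrow> le p (chain_max le c)"
proof -
  have cc: "finite c" "c \<noteq> {}" "\<forall>p\<in>c. \<forall>q\<in>c. le p q \<or> le q p" using pchainsD[OF assms(2)] by auto
  obtain m where m: "m \<in> c" "\<forall>p\<in>c. le p m" using chain_has_max[OF assms(1) cc] by blast
  then show "chain_max le c \<in> c" "\<And>p. p \<in> c \<Longrightarrow> le p (chain_max le c)"
    using chain_max_eq[OF assms(1) m] by auto
qed

lemma chain_min:
  assumes "gpo le" "c \<in> pchains P le"
  shows "chain_min le c \<in> c" "\<And>p. p \<in> c \<Longrightarrow> le (chain_min le c) p"
proof -
  have cc: "finite c" "c \<noteq> {}" "\<forall>p\<in>c. \<forall>q\<in>c. le p q \<or> le q p" using pchainsD[OF assms(2)] by auto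
  obtain m where m: "m \<in> c" "\<forall>p\<in>c. le m p" using chain_has_min[OF assms(1) cc] by blast
  then show "chain_min le c \<in> c" "\<And>p. p \<in> c \<Longrightarrow> le (chain_min le c) p"
    using chain_min_eq[OF assms(1) m] by auto
qed

section \<open>basic facts on double orders\<close>

lemma spo_sub: "spo A r \<Longrightarrow> r \<subseteq> A \<times> A" by (simp add: spo_def)
lemma spo_irr: "spo A r \<Longrightarrow> (a, a) \<notin> r" by (simp add: spo_def irrefl_def)
lemma spo_trans: "spo A r \<Longrightarrow> (a,b) \<in> r \<Longrightarrow> (b,c) \<in> r \<Longrightarrow> (a,c) \<in> r"
  unfolding spo_def trans_def by blast
lemma spo_asym: "spo A r \<Longrightarrow> (a,b) \<in> r \<Longrightarrow> (b,a) \<notin> r"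
  using spo_irr spo_trans by metis

lemma doD1: "double_order A d \<Longrightarrow> spo A (fst d)" by (simp add: double_order_def)
lemma doD2: "double_order A d \<Longrightarrow> spo A (snd d)" by (simp add: double_order_def)
lemma doD3: "double_order A d \<Longrightarrow> a \<in> A \<Longrightarrow> b \<in> A \<Longrightarrow> a \<noteq> b \<Longrightarrow>
   (a,b) \<in> fst d \<or> (b,a) \<in> fst d \<or> (a,b) \<in> snd d \<or> (b,a) \<in> snd d"
  unfolding double_order_def by blast

lemma RegD1: "d \<in> Reg A \<Longrightarrow> double_order A d" by (simp add: Reg_def regular_def)
lemma RegD2: "d \<in> Reg A \<Longrightarrow> semilinear A (fst d)" by (simp add: Reg_def regular_def)
lemma RegD3: "d \<in> Reg A \<Longrightarrow> (a,b) \<in> fst d \<Longrightarrow> (a,b) \<notin> snd d \<and> (b,a) \<notin> snd d"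
  unfolding Reg_def regular_def by blast

lemma SemiRegD1: "d \<in> SemiReg A \<Longrightarrow> double_order A d" by (simp add: SemiReg_def)

lemma finite_dords: "finite A \<Longrightarrow> finite {d :: 'a dord. fst d \<subseteq> A \<times> A \<and> snd d \<subseteq> A \<times> A}"
proof -
  assume "finite A"
  then have "finite (Pow (A \<times> A) \<times> Pow (A \<times> A))" by simp
  moreover have "{d :: 'a dord. fst d \<subseteq> A \<times> A \<and> snd d \<subseteq> A \<times> A} \<subseteq> Pow (A \<times> A) \<times> Pow (A \<times> A)"
    by (auto simp: mem_Times_iff)
  ultimately show ?thesis by (rule finite_subset[rotated])
qed

lemma do_sub: "double_order A d \<Longrightarrow> d \<in> {d :: 'a dord. fst d \<subseteq> A \<times> A \<and> snd d \<subseteq> A \<times> A}"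
  using doD1 doD2 spo_sub by blast

lemma finite_Reg: "finite A \<Longrightarrow> finite (Reg A)"
  by (rule finite_subset[OF _ finite_dords]) (use RegD1 do_sub in blast)

lemma finite_SemiReg: "finite A \<Longrightarrow> finite (SemiReg A)"
  by (rule finite_subset[OF _ finite_dords]) (use SemiRegD1 do_sub in blast)

section \<open>semilinear = weak orders\<close>

definition negtrans :: "'a set \<Rightarrow> 'a rel \<Rightarrow> bool" where
  "negtrans A r \<longleftrightarrow> (\<forall>a b c. (a,b) \<in> r \<longrightarrow> c \<in> A \<longrightarrow> (a,c) \<in> r \<or> (c,b) \<in> r)"

lemma semilinear_negtrans: "semilinear A r \<Longrightarrow> negtrans A r"
  unfolding semilinear_def negtrans_def by auto

lemma trancl_negtrans:
  assumes "\<And>r. r \<in> R \<Longrightarrow> negtrans A r"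
  shows "negtrans A ((\<Union>R)\<^sup>+)"
  unfolding negtrans_def
proof (intro allI impI)
  fix a b c assume ab: "(a, b) \<in> (\<Union>R)\<^sup>+" and c: "c \<in> A"
  from ab show "(a, c) \<in> (\<Union>R)\<^sup>+ \<or> (c, b) \<in> (\<Union>R)\<^sup>+"
  proof (induction rule: trancl_induct)
    case (base y)
    then obtain r where "r \<in> R" "(a,y) \<in> r" by blast
    then have "(a,c) \<in> r \<or> (c,y) \<in> r" using assms c unfolding negtrans_def by blast
    then show ?case using \<open>r \<in> R\<close> by blast
  next
    case (step y z)
    from step.IH show ?case
    proof
      assume "(c, y) \<in> (\<Union>R)\<^sup>+"
      then have "(c, z) \<in> (\<Union>R)\<^sup>+" by (rule trancl_into_trancl[OF _ step.hyps(2)])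
      then show ?case by blast
    qed simp
  qed
qed

lemma semilinear_of_weak:
  assumes finA: "finite A" and sub: "r \<subseteq> A \<times> A" and irr: "\<And>a. (a,a) \<notin> r"
    and tr: "\<And>a b c. (a,b) \<in> r \<Longrightarrow> (b,c) \<in> r \<Longrightarrow> (a,c) \<in> r" and nt: "negtrans A r"
  shows "semilinear A r"
proof -
  define dn where "dn a = {c \<in> A. (c,a) \<in> r}" for a
  define L where "L = dn ` A"
  define hD where "hD D = card {D' \<in> L. D' \<subseteq> D}" for D
  define h where "h a = hD (dn a)" for a
  have finL: "finite L" unfolding L_def using finA by simp
  have ntr: "(a,c) \<in> r \<or> (c,b) \<in> r" if "(a,b) \<in> r" "c \<in> A" for a b c
    using nt that unfolding negtrans_def by blast
  have lt_iff: "(a,b) \<in> r \<longleftrightarrow> dn a \<subset> dn b" if "a \<in> A" "b \<in> A" for a b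
  proof
    assume ab: "(a,b) \<in> r"
    have "dn a \<subseteq> dn b" unfolding dn_def using tr ab by blast
    moreover have "a \<in> dn b" "a \<notin> dn a" unfolding dn_def using ab that irr by auto
    ultimately show "dn a \<subset> dn b" by blast
  next
    assume "dn a \<subset> dn b"
    then obtain c where "c \<in> dn b" "c \<notin> dn a" by blast
    then have "(c,b) \<in> r" "c \<in> A" "(c,a) \<notin> r" unfolding dn_def by auto
    then show "(a,b) \<in> r" using ntr[of c b a] that by blast
  qed
  have lin: "dn a \<subseteq> dn b \<or> dn b \<subseteq> dn a" if "a \<in> A" "b \<in> A" for a b
  proof (rule ccontr)
    assume n0: "\<not> (dn a \<subseteq> dn b \<or> dn b \<subseteq> dn a)"
    then obtain c where "c \<in> dn a" "c \<notin> dn b" by blast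
    then have "(c,a) \<in> r" "c \<in> A" "(c,b) \<notin> r" unfolding dn_def by auto
    then have "(b,a) \<in> r" using ntr[of c a b] that by blast
    then have "dn b \<subset> dn a" using lt_iff[OF that(2,1)] by simp
    then show False using n0 by blast
  qed
  have linL: "D \<subseteq> D' \<or> D' \<subseteq> D" if "D \<in> L" "D' \<in> L" for D D'
    using that lin unfolding L_def by blast
  have hD_strict: "hD D < hD D'" if "D \<in> L" "D' \<in> L" "D \<subset> D'" for D D'
  proof -
    have "{D'' \<in> L. D'' \<subseteq> D} \<subset> {D'' \<in> L. D'' \<subseteq> D'}" using that by auto
    then show ?thesis unfolding hD_def by (rule psubset_card_mono[rotated]) (simp add: finL)
  qed
  have hD_mono: "hD D \<le> hD D'" if "D \<subseteq> D'" for D D'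
    unfolding hD_def by (rule card_mono) (use finL that in auto)
  have h_iff: "h a < h b \<longleftrightarrow> dn a \<subset> dn b" if "a \<in> A" "b \<in> A" for a b
  proof
    assume "h a < h b"
    show "dn a \<subset> dn b"
    proof (rule ccontr)
      assume "\<not> dn a \<subset> dn b"
      then have "dn b \<subseteq> dn a" using lin[OF that] by blast
      then have "h b \<le> h a" unfolding h_def by (rule hD_mono)
      then show False using \<open>h a < h b\<close> by simp
    qed
  next
    assume "dn a \<subset> dn b"
    then show "h a < h b" unfolding h_def using that by (intro hD_strict) (auto simp: L_def)
  qed
  have req: "r = {(a,b). a \<in> A \<and> b \<in> A \<and> h a < h b}"
    using sub lt_iff h_iff by auto
  have inj: "inj_on hD L"
  proof (rule inj_onI)
    fix D D' assume "D \<in> L" "D' \<in> L" "hD D = hD D'"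
    then show "D = D'" using linL[of D D'] hD_strict[of D D'] hD_strict[of D' D] by (auto simp: psubset_eq)
  qed
  have hrange: "hD D \<in> {1..card L}" if "D \<in> L" for D
  proof -
    have "D \<in> {D' \<in> L. D' \<subseteq> D}" using that by simp
    then have "1 \<le> hD D" unfolding hD_def using finL by (metis (no_types, lifting) One_nat_def Suc_leI card_gt_0_iff empty_iff finite_subset mem_Collect_eq subsetI)
    moreover have "hD D \<le> card L" unfolding hD_def by (rule card_mono[OF finL]) auto
    ultimately show ?thesis by simp
  qed
  have "h ` A = hD ` L" unfolding h_def L_def by auto
  moreover have "hD ` L = {1..card L}"
  proof (rule card_subset_eq)
    show "finite {1..card L}" by simp
    show "hD ` L \<subseteq> {1..card L}" using hrange by auto
    show "card (hD ` L) = card {1..card L}" using card_image[OF inj] by simp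
  qed
  ultimately have "h ` A = {1..card L}" by simp
  then show ?thesis unfolding semilinear_def using req by blast
qed

lemma dsqI: "fst a \<subseteq> fst b \<Longrightarrow> snd b \<subseteq> snd a \<Longrightarrow> dsq a b" by (simp add: dsq_def)
lemma dsubI: "fst a \<subseteq> fst b \<Longrightarrow> snd a \<subseteq> snd b \<Longrightarrow> dsub a b" by (simp add: dsub_def)

lemma Reg_SemiReg: "Reg A \<subseteq> SemiReg A"
proof
  fix d assume d: "d \<in> Reg A"
  have dd: "double_order A d" by (rule RegD1[OF d])
  have "trans (fst d)" "trans (snd d)" using doD1[OF dd] doD2[OF dd] by (simp_all add: spo_def)
  then have eq: "(\<Union>(fst ` {d}))\<^sup>+ = fst d" "(\<Union>(snd ` {d}))\<^sup>+ = snd d" by (simp_all add: trancl_id)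
  show "d \<in> SemiReg A" unfolding SemiReg_def mem_Collect_eq
  proof (intro conjI exI[of _ "{d}"])
    show "d = ((\<Union>(fst ` {d}))\<^sup>+, (\<Union>(snd ` {d}))\<^sup>+)" using eq by (simp add: prod_eq_iff)
  qed (use dd d in auto)
qed

lemma SemiReg_fst:
  assumes finA: "finite A" and d: "d \<in> SemiReg A"
  shows "negtrans A (fst d)" "semilinear A (fst d)"
proof -
  obtain S where S: "finite S" "S \<noteq> {}" "S \<subseteq> Reg A" "d = ((\<Union>(fst ` S))\<^sup>+, (\<Union>(snd ` S))\<^sup>+)"
    using d unfolding SemiReg_def by blast
  have "negtrans A ((\<Union>(fst ` S))\<^sup>+)"
  proof (rule trancl_negtrans)
    fix r assume "r \<in> fst ` S"
    then obtain e where "e \<in> S" "r = fst e" by blast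
    then show "negtrans A r" using S(3) RegD2 semilinear_negtrans by blast
  qed
  then show nt: "negtrans A (fst d)" using S(4) by simp
  have dd: "double_order A d" by (rule SemiRegD1[OF d])
  show "semilinear A (fst d)"
    by (rule semilinear_of_weak[OF finA spo_sub[OF doD1[OF dd]] spo_irr[OF doD1[OF dd]]
          spo_trans[OF doD1[OF dd]] nt])
qed

lemma Fmap_Reg:
  assumes finA: "finite A" and d: "d \<in> SemiReg A"
  shows "Fmap d \<in> Reg A"
proof -
  have dd: "double_order A d" by (rule SemiRegD1[OF d])
  note nt = SemiReg_fst(1)[OF finA d]
  have ntx: "(a,c) \<in> fst d \<or> (c,b) \<in> fst d" if "(a,b) \<in> fst d" "c \<in> A" for a b c
    using nt that unfolding negtrans_def by blast
  let ?z = "rdiff (snd d) (fst d)"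
  have sz: "spo A ?z"
    unfolding spo_def
  proof (intro conjI)
    show "?z \<subseteq> A \<times> A" using spo_sub[OF doD2[OF dd]] unfolding rdiff_def by blast
    show "irrefl ?z" using spo_irr[OF doD2[OF dd]] unfolding rdiff_def irrefl_def by blast
    show "trans ?z"
    proof (rule transI)
      fix a b c assume ab: "(a,b) \<in> ?z" and bc: "(b,c) \<in> ?z"
      have ac: "(a,c) \<in> snd d" using spo_trans[OF doD2[OF dd]] ab bc unfolding rdiff_def by blast
      have bA: "b \<in> A" using spo_sub[OF doD2[OF dd]] ab unfolding rdiff_def by blast
      have "(a,c) \<notin> fst d"
      proof
        assume "(a,c) \<in> fst d"
        then have "(a,b) \<in> fst d \<or> (b,c) \<in> fst d" using ntx bA by blast
        then show False using ab bc unfolding rdiff_def by blast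
      qed
      moreover have "(c,a) \<notin> fst d"
      proof
        assume "(c,a) \<in> fst d"
        then have "(c,b) \<in> fst d \<or> (b,a) \<in> fst d" using ntx bA by blast
        then show False using ab bc unfolding rdiff_def by blast
      qed
      ultimately show "(a,c) \<in> ?z" using ac unfolding rdiff_def by blast
    qed
  qed
  have "double_order A (Fmap d)"
    unfolding double_order_def Fmap_def fst_conv snd_conv
  proof (intro conjI ballI impI)
    show "spo A (fst d)" by (rule doD1[OF dd])
    show "spo A ?z" by (rule sz)
  next
    fix a b assume "a \<in> A" "b \<in> A" "a \<noteq> b"
    then show "(a,b) \<in> fst d \<or> (b,a) \<in> fst d \<or> (a,b) \<in> ?z \<or> (b,a) \<in> ?z"
      using doD3[OF dd] unfolding rdiff_def by blast
  qed
  moreover have "semilinear A (fst (Fmap d))" using SemiReg_fst(2)[OF finA d] by (simp add: Fmap_def)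
  moreover have "\<forall>a b. (a,b) \<in> fst (Fmap d) \<longrightarrow> (a,b) \<notin> snd (Fmap d) \<and> (b,a) \<notin> snd (Fmap d)"
    by (auto simp: Fmap_def rdiff_def)
  ultimately show ?thesis by (simp add: Reg_def regular_def)
qed

lemma Fmap_mono:
  assumes d1: "d1 \<in> SemiReg A" and d2: "d2 \<in> SemiReg A" and le: "dsub d1 d2"
  shows "dsq (Fmap d1) (Fmap d2)"
proof -
  have dd1: "double_order A d1" and dd2: "double_order A d2" using SemiRegD1 d1 d2 by blast+
  have x: "fst d1 \<subseteq> fst d2" and y: "snd d1 \<subseteq> snd d2" using le by (auto simp: dsub_def)
  have "rdiff (snd d2) (fst d2) \<subseteq> rdiff (snd d1) (fst d1)"
  proof
    fix p assume p: "p \<in> rdiff (snd d2) (fst d2)"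
    obtain a b where pab: "p = (a,b)" by (cases p)
    have ab2: "(a,b) \<in> snd d2" "(a,b) \<notin> fst d2" "(b,a) \<notin> fst d2" using p pab by (auto simp: rdiff_def)
    have ab1: "(a,b) \<notin> fst d1" "(b,a) \<notin> fst d1" using ab2 x by auto
    have AA: "a \<in> A" "b \<in> A" using spo_sub[OF doD2[OF dd2]] ab2(1) by auto
    have ne: "a \<noteq> b" using spo_irr[OF doD2[OF dd2]] ab2(1) by auto
    have "(b,a) \<notin> snd d1"
    proof
      assume "(b,a) \<in> snd d1"
      then have "(b,a) \<in> snd d2" using y by auto
      then show False using spo_asym[OF doD2[OF dd2] ab2(1)] by simp
    qed
    then have "(a,b) \<in> snd d1" using doD3[OF dd1 AA ne] ab1 by blast
    then show "p \<in> rdiff (snd d1) (fst d1)" using ab1 pab by (simp add: rdiff_def)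
  qed
  then show ?thesis using x by (simp add: dsq_def Fmap_def)
qed

lemma reg_chain_facts:
  assumes c: "c \<in> pchains (Reg A) dsq"
  shows "chain_max dsq c \<in> c" "\<And>p. p \<in> c \<Longrightarrow> dsq p (chain_max dsq c)"
        "chain_min dsq c \<in> c" "\<And>p. p \<in> c \<Longrightarrow> dsq (chain_min dsq c) p"
        "c \<subseteq> Reg A"
  using chain_max[OF gpo_dsq c] chain_min[OF gpo_dsq c] pchainsD[OF c] by auto

lemma Gmap_SemiReg:
  assumes c: "c \<in> pchains (Reg A) dsq"
  shows "Gmap c \<in> SemiReg A"
proof -
  note cf = reg_chain_facts[OF c]
  let ?M = "chain_max dsq c" and ?m = "chain_min dsq c"
  have MR: "?M \<in> Reg A" and mR: "?m \<in> Reg A" using cf by auto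
  have e1: "\<Union>(fst ` c) = fst ?M" using cf(1,2) by (auto simp: dsq_def)
  have e2: "\<Union>(snd ` c) = snd ?m" using cf(3,4) by (auto simp: dsq_def)
  have trM: "trans (fst ?M)" using doD1[OF RegD1[OF MR]] by (simp add: spo_def)
  have trm: "trans (snd ?m)" using doD2[OF RegD1[OF mR]] by (simp add: spo_def)
  have Gd: "Gmap c = ((\<Union>(fst ` c))\<^sup>+, (\<Union>(snd ` c))\<^sup>+)"
    unfolding Gmap_def e1 e2 using trM trm by (simp add: trancl_id)
  have yy: "snd ?M \<subseteq> snd ?m" using cf(1,4) by (auto simp: dsq_def)
  have "double_order A (Gmap c)"
    unfolding double_order_def Gmap_def fst_conv snd_conv
  proof (intro conjI ballI impI)
    show "spo A (fst ?M)" by (rule doD1[OF RegD1[OF MR]])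
    show "spo A (snd ?m)" by (rule doD2[OF RegD1[OF mR]])
  next
    fix a b assume "a \<in> A" "b \<in> A" "a \<noteq> b"
    then show "(a,b) \<in> fst ?M \<or> (b,a) \<in> fst ?M \<or> (a,b) \<in> snd ?m \<or> (b,a) \<in> snd ?m"
      using doD3[OF RegD1[OF MR]] yy by blast
  qed
  moreover have "finite c" "c \<noteq> {}" using pchainsD[OF c] by auto
  ultimately show ?thesis unfolding SemiReg_def using Gd cf(5) by blast
qed

lemma Gmap_mono:
  assumes c: "c \<in> pchains (Reg A) dsq" and c': "c' \<in> pchains (Reg A) dsq" and sub: "c \<subseteq> c'"
  shows "dsub (Gmap c) (Gmap c')"
proof -
  note cf = reg_chain_facts[OF c] and cf' = reg_chain_facts[OF c']
  have "dsq (chain_max dsq c) (chain_max dsq c')" using cf(1) cf'(2) sub by blast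
  moreover have "dsq (chain_min dsq c') (chain_min dsq c)" using cf(3) cf'(4) sub by blast
  ultimately show ?thesis by (simp add: dsq_def dsub_def Gmap_def)
qed

lemma FG_comp:
  assumes c: "c \<in> pchains (Reg A) dsq" and e: "e \<in> Reg A"
    and comp: "\<And>x. x \<in> c \<Longrightarrow> dsq e x \<or> dsq x e"
  shows "dsq e (Fmap (Gmap c)) \<or> dsq (Fmap (Gmap c)) e"
proof -
  note cf = reg_chain_facts[OF c]
  let ?M = "chain_max dsq c" and ?m = "chain_min dsq c"
  have MR: "?M \<in> Reg A" and mR: "?m \<in> Reg A" using cf by auto
  have FG: "Fmap (Gmap c) = (fst ?M, rdiff (snd ?m) (fst ?M))" by (simp add: Fmap_def Gmap_def)
  have mM: "dsq ?m ?M" using cf by blast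
  have de: "double_order A e" by (rule RegD1[OF e])
  show ?thesis
  proof (cases "dsq ?M e")
    case True
    have "fst ?M \<subseteq> fst e" "snd e \<subseteq> snd ?M" using True by (auto simp: dsq_def)
    moreover have "snd ?M \<subseteq> snd ?m" using mM by (auto simp: dsq_def)
    moreover have "snd e \<subseteq> rdiff (snd ?m) (fst ?M)"
    proof
      fix p assume p: "p \<in> snd e"
      obtain a b where pab: "p = (a,b)" by (cases p)
      have "(a,b) \<notin> fst e" "(b,a) \<notin> fst e" using RegD3[OF e] p pab by blast+
      then show "p \<in> rdiff (snd ?m) (fst ?M)"
        using calculation p pab unfolding rdiff_def by blast
    qed
    ultimately have "dsq (Fmap (Gmap c)) e" unfolding FG dsq_def by simp
    then show ?thesis by simp
  next
    case False
    then have eM: "dsq e ?M" using comp[OF cf(1)] by blast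
    have x: "fst e \<subseteq> fst ?M" using eM by (simp add: dsq_def)
    have rd: "rdiff (snd ?m) (fst ?M) \<subseteq> snd e"
    proof
      fix p assume p: "p \<in> rdiff (snd ?m) (fst ?M)"
      obtain a b where pab: "p = (a,b)" by (cases p)
      have ab: "(a,b) \<in> snd ?m" "(a,b) \<notin> fst ?M" "(b,a) \<notin> fst ?M" using p pab by (auto simp: rdiff_def)
      have abe: "(a,b) \<notin> fst e" "(b,a) \<notin> fst e" using ab x by auto
      have dm: "double_order A ?m" by (rule RegD1[OF mR])
      have AA: "a \<in> A" "b \<in> A" using spo_sub[OF doD2[OF dm]] ab(1) by auto
      have ne: "a \<noteq> b" using spo_irr[OF doD2[OF dm]] ab(1) by auto
      have "(b,a) \<notin> snd e"
      proof
        assume ba: "(b,a) \<in> snd e"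
        have "dsq e ?m \<or> dsq ?m e" using comp[OF cf(3)] .
        then show False
        proof
          assume "dsq e ?m"
          then have "(a,b) \<in> snd e" using ab(1) by (auto simp: dsq_def)
          then show False using spo_asym[OF doD2[OF de] ba] by simp
        next
          assume "dsq ?m e"
          then have "(b,a) \<in> snd ?m" using ba by (auto simp: dsq_def)
          then show False using spo_asym[OF doD2[OF dm] ab(1)] by simp
        qed
      qed
      then show "p \<in> snd e" using doD3[OF de AA ne] abe pab by blast
    qed
    have "dsq e (Fmap (Gmap c))" unfolding FG by (rule dsqI) (use x rd in simp_all)
    then show ?thesis by simp
  qed
qed

lemma sdF_pchain:
  assumes finA: "finite A" and c: "c \<in> pchains (SemiReg A) dsub"
  shows "Fmap ` c \<in> pchains (Reg A) dsq"
proof -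
  have cc: "c \<subseteq> SemiReg A" "finite c" "c \<noteq> {}" "\<forall>p\<in>c. \<forall>q\<in>c. dsub p q \<or> dsub q p"
    using pchainsD[OF c] by auto
  have "Fmap ` c \<subseteq> Reg A" using Fmap_Reg[OF finA] cc(1) by blast
  moreover have "\<forall>p\<in>Fmap ` c. \<forall>q\<in>Fmap ` c. dsq p q \<or> dsq q p"
    using cc(1,4) Fmap_mono by (smt (verit, best) image_iff subsetD)
  ultimately show ?thesis using cc(2,3) unfolding pchains_def by auto
qed

lemma semi_chain_facts:
  assumes c: "c \<in> pchains (SemiReg A) dsub"
  shows "chain_max dsub c \<in> c" "\<And>p. p \<in> c \<Longrightarrow> dsub p (chain_max dsub c)" "c \<subseteq> SemiReg A"
  using chain_max[OF gpo_dsub c] pchainsD[OF c] by auto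

lemma GF_le_L:
  assumes finA: "finite A" and c: "c \<in> pchains (SemiReg A) dsub"
  shows "dsub (Gmap (Fmap ` c)) (chain_max dsub c)"
proof -
  note sc = semi_chain_facts[OF c]
  note fc = reg_chain_facts[OF sdF_pchain[OF finA c]]
  obtain d1 where d1: "d1 \<in> c" "chain_max dsq (Fmap ` c) = Fmap d1" using fc(1) by blast
  obtain d0 where d0: "d0 \<in> c" "chain_min dsq (Fmap ` c) = Fmap d0" using fc(3) by blast
  have "fst (Fmap d1) \<subseteq> fst (chain_max dsub c)"
    using sc(2)[OF d1(1)] by (simp add: dsub_def Fmap_def)
  moreover have "snd (Fmap d0) \<subseteq> snd (chain_max dsub c)"
    using sc(2)[OF d0(1)] by (auto simp: dsub_def Fmap_def rdiff_def)
  ultimately show ?thesis using d1 d0 by (simp add: dsub_def Gmap_def)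
qed

lemma L_mono:
  assumes c: "c \<in> pchains (SemiReg A) dsub" and c': "c' \<in> pchains (SemiReg A) dsub" and sub: "c \<subseteq> c'"
  shows "dsub (chain_max dsub c) (chain_max dsub c')"
  using semi_chain_facts[OF c] semi_chain_facts[OF c'] sub by blast

lemma GF_mono:
  assumes finA: "finite A" and c: "c \<in> pchains (SemiReg A) dsub" and c': "c' \<in> pchains (SemiReg A) dsub" and sub: "c \<subseteq> c'"
  shows "dsub (Gmap (Fmap ` c)) (Gmap (Fmap ` c'))"
  by (rule Gmap_mono[OF sdF_pchain[OF finA c] sdF_pchain[OF finA c']]) (use sub in blast)

definition aut :: "'b set \<Rightarrow> ('b \<Rightarrow> 'b \<Rightarrow> bool) \<Rightarrow> ('b \<Rightarrow> 'b) \<Rightarrow> ('b \<Rightarrow> 'b) \<Rightarrow> bool" where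
  "aut P le \<alpha> \<beta> \<longleftrightarrow> (\<forall>p\<in>P. \<alpha> p \<in> P \<and> \<beta> p \<in> P \<and> \<beta> (\<alpha> p) = p \<and> \<alpha> (\<beta> p) = p) \<and>
      (\<forall>p\<in>P. \<forall>q\<in>P. le (\<alpha> p) (\<alpha> q) \<longleftrightarrow> le p q)"

lemma autD:
  assumes "aut P le \<alpha> \<beta>" "p \<in> P"
  shows "\<alpha> p \<in> P" "\<beta> p \<in> P" "\<beta> (\<alpha> p) = p" "\<alpha> (\<beta> p) = p"
  using assms unfolding aut_def by auto

lemma autD_le:
  assumes "aut P le \<alpha> \<beta>" "p \<in> P" "q \<in> P"
  shows "le (\<alpha> p) (\<alpha> q) \<longleftrightarrow> le p q"
  using assms unfolding aut_def by auto

lemma aut_sym: assumes "aut P le \<alpha> \<beta>" shows "aut P le \<beta> \<alpha>"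
  unfolding aut_def
proof (intro conjI ballI)
  fix p assume "p \<in> P"
  then show "\<beta> p \<in> P" "\<alpha> p \<in> P" "\<alpha> (\<beta> p) = p" "\<beta> (\<alpha> p) = p" using autD[OF assms] by auto
next
  fix p q assume pq: "p \<in> P" "q \<in> P"
  have "le (\<alpha> (\<beta> p)) (\<alpha> (\<beta> q)) \<longleftrightarrow> le (\<beta> p) (\<beta> q)"
    using autD_le[OF assms] autD(2)[OF assms] pq by blast
  then show "le (\<beta> p) (\<beta> q) \<longleftrightarrow> le p q" using autD(4)[OF assms] pq by simp
qed

lemma aut_image:
  assumes a: "aut P le \<alpha> \<beta>"
  shows "aut (pchains P le) (\<subseteq>) ((`) \<alpha>) ((`) \<beta>)"
proof -
  have ch: "\<alpha> ` c \<in> pchains P le" if c: "c \<in> pchains P le" and a': "aut P le \<alpha> \<beta>" for c \<alpha> \<beta>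
  proof -
    have cc: "c \<subseteq> P" "finite c" "c \<noteq> {}" "\<forall>p\<in>c. \<forall>q\<in>c. le p q \<or> le q p" using pchainsD[OF c] by auto
    have "\<alpha> ` c \<subseteq> P" using autD(1)[OF a'] cc(1) by blast
    moreover have "\<forall>p\<in>\<alpha> ` c. \<forall>q\<in>\<alpha> ` c. le p q \<or> le q p"
      using cc(1,4) autD_le[OF a'] by (smt (verit, ccfv_SIG) image_iff subsetD)
    ultimately show ?thesis using cc(2,3) unfolding pchains_def by auto
  qed
  have inv: "\<beta> ` \<alpha> ` c = c" if "c \<subseteq> P" "aut P le \<alpha> \<beta>" for c \<alpha> \<beta>
  proof -
    have "\<beta> ` \<alpha> ` c = (\<lambda>p. \<beta> (\<alpha> p)) ` c" by (simp add: image_image)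
    also have "\<dots> = c" using autD(3)[OF that(2)] that(1) by (simp add: subset_eq)
    finally show ?thesis .
  qed
  have b: "aut P le \<beta> \<alpha>" by (rule aut_sym[OF a])
  show ?thesis
    unfolding aut_def
  proof (intro conjI ballI)
    fix c assume c: "c \<in> pchains P le"
    have cP: "c \<subseteq> P" using pchainsD[OF c] by auto
    show "\<alpha> ` c \<in> pchains P le" by (rule ch[OF c a])
    show "\<beta> ` c \<in> pchains P le" by (rule ch[OF c b])
    show "\<beta> ` \<alpha> ` c = c" by (rule inv[OF cP a])
    show "\<alpha> ` \<beta> ` c = c" by (rule inv[OF cP b])
  next
    fix c c' assume c: "c \<in> pchains P le" and c': "c' \<in> pchains P le"
    have cP: "c \<subseteq> P" "c' \<subseteq> P" using pchainsD[OF c] pchainsD[OF c'] by auto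
    show "\<alpha> ` c \<subseteq> \<alpha> ` c' \<longleftrightarrow> c \<subseteq> c'"
    proof
      assume "\<alpha> ` c \<subseteq> \<alpha> ` c'"
      then have "\<beta> ` \<alpha> ` c \<subseteq> \<beta> ` \<alpha> ` c'" by blast
      then show "c \<subseteq> c'" using inv[OF cP(1) a] inv[OF cP(2) a] by simp
    qed blast
  qed
qed

lemma rm_aut:
  assumes a: "aut P le \<alpha> \<beta>"
  shows "realize_map P \<alpha> t = (\<lambda>p. if p \<in> P then t (\<beta> p) else 0)"
proof
  fix p
  show "realize_map P \<alpha> t p = (if p \<in> P then t (\<beta> p) else 0)"
  proof (cases "p \<in> P")
    case True
    have "{p0 \<in> P. \<alpha> p0 = p} = {\<beta> p}" using autD[OF a] True by force
    then show ?thesis using True by (simp add: realize_map_def)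
  next
    case False
    have e: "{p0 \<in> P. \<alpha> p0 = p} = {}" using autD[OF a] False by force
    show ?thesis unfolding realize_map_def e using False by simp
  qed
qed

lemma rm_aut_arg:
  assumes a: "aut P le \<alpha> \<beta>" and w: "\<And>p. p \<in> P \<Longrightarrow> w' p = w (\<beta> p)"
  shows "realize_map P g w' = realize_map P (\<lambda>p. g (\<alpha> p)) w"
proof
  fix r
  have bij: "bij_betw \<alpha> {p0 \<in> P. g (\<alpha> p0) = r} {p \<in> P. g p = r}"
    by (rule bij_betw_byWitness[where f'=\<beta>]) (use autD[OF a] in auto)
  have "realize_map P (\<lambda>p. g (\<alpha> p)) w r = (\<Sum>p0\<in>{p0 \<in> P. g (\<alpha> p0) = r}. w' (\<alpha> p0))"
    unfolding realize_map_def by (rule sum.cong) (use autD[OF a] w in auto)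
  also have "\<dots> = (\<Sum>p\<in>{p \<in> P. g p = r}. w' p)" by (rule sum.reindex_bij_betw[OF bij])
  finally show "realize_map P g w' r = realize_map P (\<lambda>p. g (\<alpha> p)) w r"
    by (simp add: realize_map_def)
qed

lemma bary_aut:
  assumes finP: "finite P" and a: "aut P le \<alpha> \<beta>"
  shows "bary P le (realize_map (pchains P le) ((`) \<alpha>) u) = realize_map P \<alpha> (bary P le u)"
proof
  fix p
  note ai = aut_image[OF a]
  show "bary P le (realize_map (pchains P le) ((`) \<alpha>) u) p = realize_map P \<alpha> (bary P le u) p"
  proof (cases "p \<in> P")
    case False
    have e: "{c \<in> pchains P le. p \<in> c} = {}" using False pchainsD by blast
    show ?thesis unfolding rm_aut[OF a] bary_def e using False by simp
  next
    case True
    let ?S = "{c \<in> pchains P le. \<beta> p \<in> c}" and ?T = "{c \<in> pchains P le. p \<in> c}"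
    have bij: "bij_betw ((`) \<alpha>) ?S ?T"
    proof (rule bij_betw_byWitness[where f'="(`) \<beta>"])
      show "\<forall>c\<in>?S. \<beta> ` \<alpha> ` c = c" using autD(3)[OF ai] by auto
      show "\<forall>c\<in>?T. \<alpha> ` \<beta> ` c = c" using autD(4)[OF ai] by auto
      show "(`) \<alpha> ` ?S \<subseteq> ?T" using autD(1)[OF ai] autD(4)[OF a True] by force
      show "(`) \<beta> ` ?T \<subseteq> ?S" using autD(2)[OF ai] by force
    qed
    have card: "card (\<alpha> ` c) = card c" if "c \<in> pchains P le" for c
    proof (rule card_image)
      show "inj_on \<alpha> c" using autD(3)[OF a] pchainsD[OF that] by (metis inj_on_inverseI subsetD)
    qed
    have "bary P le (realize_map (pchains P le) ((`) \<alpha>) u) p = (\<Sum>c\<in>?T. u (\<beta> ` c) / real (card c))"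
      unfolding bary_def rm_aut[OF ai] by (rule sum.cong) auto
    also have "\<dots> = (\<Sum>c\<in>?S. u (\<beta> ` \<alpha> ` c) / real (card (\<alpha> ` c)))"
      by (rule sum.reindex_bij_betw[OF bij, symmetric])
    also have "\<dots> = (\<Sum>c\<in>?S. u c / real (card c))"
      by (rule sum.cong) (use autD(3)[OF ai] card in auto)
    also have "\<dots> = realize_map P \<alpha> (bary P le u) p"
      unfolding rm_aut[OF a] bary_def using True by simp
    finally show ?thesis .
  qed
qed

lemma aut_real:
  assumes finP: "finite P" and a: "aut P le \<alpha> \<beta>" and t: "t \<in> realization P le"
  shows "realize_map P \<alpha> t \<in> realization P le"
  by (rule rm_real[OF finP finP _ _ t]) (use autD[OF a] autD_le[OF a] in auto)

lemma ibary_aut: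
  assumes finP: "finite P" and a: "aut P le \<alpha> \<beta>" and s: "s \<in> realization P le"
  shows "ibary P le (realize_map P \<alpha> s) = realize_map (pchains P le) ((`) \<alpha>) (ibary P le s)"
proof -
  have u: "ibary P le s \<in> realization (pchains P le) (\<subseteq>)" "bary P le (ibary P le s) = s"
    using ibary_in[OF finP s] by auto
  have v: "realize_map (pchains P le) ((`) \<alpha>) (ibary P le s) \<in> realization (pchains P le) (\<subseteq>)"
    by (rule aut_real[OF finite_pchains0[OF finP] aut_image[OF a] u(1)])
  have "bary P le (realize_map (pchains P le) ((`) \<alpha>) (ibary P le s)) = realize_map P \<alpha> s"
    using bary_aut[OF finP a] u(2) by simp
  then show ?thesis using ibary_bary[OF finP v] by metis
qed

lemma rm_add: "realize_map P f (\<lambda>p. a p + b p) = (\<lambda>r. realize_map P f a r + realize_map P f b r)"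
  by (auto simp: realize_map_def sum.distrib)

lemma sweep_aut:
  assumes finP: "finite P" and finQ: "finite Q" and a: "aut P le \<alpha> \<beta>"
    and fP: "f ` P \<subseteq> Q" and gP: "g ` P \<subseteq> Q"
    and fa: "\<And>p. p \<in> P \<Longrightarrow> f (\<alpha> p) = \<gamma> (f p)" and ga: "\<And>p. p \<in> P \<Longrightarrow> g (\<alpha> p) = \<gamma> (g p)"
  shows "sweep P le f g s (realize_map P \<alpha> t) = realize_map Q \<gamma> (sweep P le f g s t)"
proof -
  let ?t' = "realize_map P \<alpha> t"
  have t': "\<And>p. p \<in> P \<Longrightarrow> ?t' p = t (\<beta> p)" using rm_aut[OF a] by simp
  have abv: "abv P le ?t' p = abv P le t (\<beta> p)" if p: "p \<in> P" for p
  proof -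
    have bij: "bij_betw \<alpha> {q0 \<in> P. q0 \<noteq> \<beta> p \<and> le (\<beta> p) q0} {q \<in> P. q \<noteq> p \<and> le p q}"
    proof (rule bij_betw_byWitness[where f'=\<beta>])
      show "\<forall>q\<in>{q0 \<in> P. q0 \<noteq> \<beta> p \<and> le (\<beta> p) q0}. \<beta> (\<alpha> q) = q" using autD[OF a] by auto
      show "\<forall>q\<in>{q \<in> P. q \<noteq> p \<and> le p q}. \<alpha> (\<beta> q) = q" using autD[OF a] by auto
      show "\<alpha> ` {q0 \<in> P. q0 \<noteq> \<beta> p \<and> le (\<beta> p) q0} \<subseteq> {q \<in> P. q \<noteq> p \<and> le p q}"
      proof clarify
        fix q0 assume q0: "q0 \<in> P" "q0 \<noteq> \<beta> p" "le (\<beta> p) q0"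
        have "le (\<alpha> (\<beta> p)) (\<alpha> q0)" using autD_le[OF a autD(2)[OF a p] q0(1)] q0(3) by simp
        moreover have "\<alpha> q0 \<noteq> p" using q0 autD[OF a] p by metis
        ultimately show "\<alpha> q0 \<in> P \<and> \<alpha> q0 \<noteq> p \<and> le p (\<alpha> q0)" using autD[OF a] p q0(1) by simp
      qed
      show "\<beta> ` {q \<in> P. q \<noteq> p \<and> le p q} \<subseteq> {q0 \<in> P. q0 \<noteq> \<beta> p \<and> le (\<beta> p) q0}"
      proof clarify
        fix q assume q: "q \<in> P" "q \<noteq> p" "le p q"
        have "le (\<alpha> (\<beta> p)) (\<alpha> (\<beta> q))" using q(3) autD(4)[OF a] p q(1) by simp
        then have "le (\<beta> p) (\<beta> q)" using autD_le[OF a autD(2)[OF a p] autD(2)[OF a q(1)]] by simp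
        moreover have "\<beta> q \<noteq> \<beta> p" using q autD[OF a] p by metis
        ultimately show "\<beta> q \<in> P \<and> \<beta> q \<noteq> \<beta> p \<and> le (\<beta> p) (\<beta> q)" using autD[OF a] q(1) by simp
      qed
    qed
    have "abv P le ?t' p = (\<Sum>q\<in>{q \<in> P. q \<noteq> p \<and> le p q}. t (\<beta> q))"
      unfolding abv_def by (rule sum.cong) (use t' in auto)
    also have "\<dots> = (\<Sum>q0\<in>{q0 \<in> P. q0 \<noteq> \<beta> p \<and> le (\<beta> p) q0}. t (\<beta> (\<alpha> q0)))"
      by (rule sum.reindex_bij_betw[OF bij, symmetric])
    also have "\<dots> = abv P le t (\<beta> p)"
      unfolding abv_def by (rule sum.cong) (use autD[OF a] in auto)
    finally show ?thesis .
  qed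
  have alf: "alf P le s ?t' p = alf P le s t (\<beta> p)" if "p \<in> P" for p
    using abv[OF that] t'[OF that] by (simp add: alf_def)
  have "sweep P le f g s ?t' = (\<lambda>r. realize_map P (\<lambda>p. g (\<alpha> p)) (alf P le s t) r +
        realize_map P (\<lambda>p. f (\<alpha> p)) (\<lambda>p. t p - alf P le s t p) r)"
    unfolding sweep_def
    using rm_aut_arg[OF a, of "alf P le s ?t'" "alf P le s t" g] alf
      rm_aut_arg[OF a, of "\<lambda>p. ?t' p - alf P le s ?t' p" "\<lambda>p. t p - alf P le s t p" f] alf t'
    by simp
  also have "\<dots> = (\<lambda>r. realize_map P (\<lambda>p. \<gamma> (g p)) (alf P le s t) r +
        realize_map P (\<lambda>p. \<gamma> (f p)) (\<lambda>p. t p - alf P le s t p) r)"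
    using rm_cong[of P "\<lambda>p. g (\<alpha> p)" "\<lambda>p. \<gamma> (g p)"] rm_cong[of P "\<lambda>p. f (\<alpha> p)" "\<lambda>p. \<gamma> (f p)"] fa ga
    by simp
  also have "\<dots> = realize_map Q \<gamma> (sweep P le f g s t)"
    unfolding sweep_def rm_add
    by (simp only: rm_comp[OF finP finQ gP] rm_comp[OF finP finQ fP] o_def)
  finally show ?thesis .
qed

lemma act_rel_iff: "(a,b) \<in> act_rel \<sigma> r \<longleftrightarrow> (\<sigma> a, \<sigma> b) \<in> r"
  by (simp add: act_rel_def)

lemma act_rel_inv1: "\<sigma> permutes A \<Longrightarrow> act_rel (inv \<sigma>) (act_rel \<sigma> r) = r"
  by (auto simp: act_rel_def permutes_inverses)

lemma act_rel_inv2: "\<sigma> permutes A \<Longrightarrow> act_rel \<sigma> (act_rel (inv \<sigma>) r) = r"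
  by (auto simp: act_rel_def permutes_inverses)

lemma act_inv1: "\<sigma> permutes A \<Longrightarrow> act (inv \<sigma>) (act \<sigma> d) = d"
  by (simp add: act_def act_rel_inv1 prod_eq_iff)

lemma act_inv2: "\<sigma> permutes A \<Longrightarrow> act \<sigma> (act (inv \<sigma>) d) = d"
  by (simp add: act_def act_rel_inv2 prod_eq_iff)

lemma act_rel_mono_iff:
  assumes "\<sigma> permutes A"
  shows "act_rel \<sigma> r \<subseteq> act_rel \<sigma> r' \<longleftrightarrow> r \<subseteq> r'"
proof
  assume "act_rel \<sigma> r \<subseteq> act_rel \<sigma> r'"
  then have "act_rel (inv \<sigma>) (act_rel \<sigma> r) \<subseteq> act_rel (inv \<sigma>) (act_rel \<sigma> r')"
    by (auto simp: act_rel_def)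
  then show "r \<subseteq> r'" using act_rel_inv1[OF assms] by simp
qed (auto simp: act_rel_def)

lemma act_spo:
  assumes s: "\<sigma> permutes A" and r: "spo A r"
  shows "spo A (act_rel \<sigma> r)"
  unfolding spo_def
proof (intro conjI)
  show "act_rel \<sigma> r \<subseteq> A \<times> A"
    using spo_sub[OF r] permutes_in_image[OF s] by (auto simp: act_rel_def)
  show "irrefl (act_rel \<sigma> r)" using spo_irr[OF r] by (auto simp: act_rel_def irrefl_def)
  show "trans (act_rel \<sigma> r)" using spo_trans[OF r] by (auto simp: act_rel_def intro: transI)
qed

lemma act_semilinear:
  assumes s: "\<sigma> permutes A" and r: "semilinear A r"
  shows "semilinear A (act_rel \<sigma> r)"
proof -
  obtain h :: "'a \<Rightarrow> nat" and l where h: "h ` A = {1..l}" "r = {(a,b). a \<in> A \<and> b \<in> A \<and> h a < h b}"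
    using r unfolding semilinear_def by blast
  have "(\<lambda>a. h (\<sigma> a)) ` A = h ` \<sigma> ` A" by (simp add: image_image)
  then have "(\<lambda>a. h (\<sigma> a)) ` A = {1..l}" using h(1) permutes_image[OF s] by simp
  moreover have "act_rel \<sigma> r = {(a,b). a \<in> A \<and> b \<in> A \<and> h (\<sigma> a) < h (\<sigma> b)}"
    using h(2) permutes_in_image[OF s] by (auto simp: act_rel_def)
  ultimately show ?thesis unfolding semilinear_def by blast
qed

lemma act_do:
  assumes s: "\<sigma> permutes A" and d: "double_order A d"
  shows "double_order A (act \<sigma> d)"
  unfolding double_order_def act_def fst_conv snd_conv
proof (intro conjI ballI impI)
  show "spo A (act_rel \<sigma> (fst d))" by (rule act_spo[OF s doD1[OF d]])
  show "spo A (act_rel \<sigma> (snd d))" by (rule act_spo[OF s doD2[OF d]])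
next
  fix a b assume ab: "a \<in> A" "b \<in> A" "a \<noteq> b"
  have "\<sigma> a \<in> A" "\<sigma> b \<in> A" "\<sigma> a \<noteq> \<sigma> b"
    using ab permutes_in_image[OF s] permutes_inj[OF s] by (auto dest: injD)
  then show "(a, b) \<in> act_rel \<sigma> (fst d) \<or> (b, a) \<in> act_rel \<sigma> (fst d) \<or>
          (a, b) \<in> act_rel \<sigma> (snd d) \<or> (b, a) \<in> act_rel \<sigma> (snd d)"
    using doD3[OF d] by (simp add: act_rel_def)
qed

lemma act_Reg:
  assumes s: "\<sigma> permutes A" and d: "d \<in> Reg A"
  shows "act \<sigma> d \<in> Reg A"
proof -
  have "double_order A (act \<sigma> d)" by (rule act_do[OF s RegD1[OF d]])
  moreover have "semilinear A (fst (act \<sigma> d))"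
    using act_semilinear[OF s RegD2[OF d]] by (simp add: act_def)
  moreover have "\<forall>a b. (a,b) \<in> fst (act \<sigma> d) \<longrightarrow> (a,b) \<notin> snd (act \<sigma> d) \<and> (b,a) \<notin> snd (act \<sigma> d)"
    using RegD3[OF d] by (simp add: act_def act_rel_def)
  ultimately show ?thesis by (simp add: Reg_def regular_def)
qed

lemma act_trancl:
  assumes s: "\<sigma> permutes A"
  shows "act_rel \<sigma> (r\<^sup>+) = (act_rel \<sigma> r)\<^sup>+"
proof
  show "(act_rel \<sigma> r)\<^sup>+ \<subseteq> act_rel \<sigma> (r\<^sup>+)"
  proof clarify
    fix a b assume "(a,b) \<in> (act_rel \<sigma> r)\<^sup>+"
    then show "(a,b) \<in> act_rel \<sigma> (r\<^sup>+)"
    proof (induction rule: trancl_induct)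
      case (base y) then show ?case by (simp add: act_rel_def)
    next
      case (step y z) then show ?case by (auto simp: act_rel_def intro: trancl_into_trancl)
    qed
  qed
next
  have gen: "(inv \<sigma> x, inv \<sigma> y) \<in> (act_rel \<sigma> r)\<^sup>+" if "(x,y) \<in> r\<^sup>+" for x y
    using that
  proof (induction rule: trancl_induct)
    case (base y) then show ?case by (auto simp: act_rel_def permutes_inverses[OF s])
  next
    case (step y z)
    have "(inv \<sigma> y, inv \<sigma> z) \<in> act_rel \<sigma> r" using step.hyps(2) by (simp add: act_rel_def permutes_inverses[OF s])
    then show ?case using step.IH by (rule trancl_into_trancl[rotated])
  qed
  show "act_rel \<sigma> (r\<^sup>+) \<subseteq> (act_rel \<sigma> r)\<^sup>+"
  proof clarify
    fix a b assume "(a,b) \<in> act_rel \<sigma> (r\<^sup>+)"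
    then have "(\<sigma> a, \<sigma> b) \<in> r\<^sup>+" by (simp add: act_rel_def)
    then show "(a,b) \<in> (act_rel \<sigma> r)\<^sup>+" using gen permutes_inverses[OF s] by metis
  qed
qed

lemma act_Union: "act_rel \<sigma> (\<Union>R) = \<Union>(act_rel \<sigma> ` R)"
  by (auto simp: act_rel_def)

lemma act_SemiReg:
  assumes s: "\<sigma> permutes A" and d: "d \<in> SemiReg A"
  shows "act \<sigma> d \<in> SemiReg A"
proof -
  obtain S where S: "finite S" "S \<noteq> {}" "S \<subseteq> Reg A" "d = ((\<Union>(fst ` S))\<^sup>+, (\<Union>(snd ` S))\<^sup>+)"
    using d unfolding SemiReg_def by blast
  have dd: "double_order A (act \<sigma> d)" by (rule act_do[OF s SemiRegD1[OF d]])
  have fs: "finite (act \<sigma> ` S)" "act \<sigma> ` S \<noteq> {}" "act \<sigma> ` S \<subseteq> Reg A"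
    using S act_Reg[OF s] by auto
  have i1: "fst ` act \<sigma> ` S = act_rel \<sigma> ` fst ` S" and i2: "snd ` act \<sigma> ` S = act_rel \<sigma> ` snd ` S"
    by (auto simp: act_def image_image)
  have eq: "act \<sigma> d = ((\<Union>(act_rel \<sigma> ` fst ` S))\<^sup>+, (\<Union>(act_rel \<sigma> ` snd ` S))\<^sup>+)"
    using S(4) by (simp add: act_def act_trancl[OF s] act_Union image_image)
  show ?thesis unfolding SemiReg_def mem_Collect_eq
  proof (intro conjI exI[of _ "act \<sigma> ` S"])
    show "act \<sigma> d = ((\<Union>(fst ` act \<sigma> ` S))\<^sup>+, (\<Union>(snd ` act \<sigma> ` S))\<^sup>+)"
      unfolding i1 i2 by (rule eq)
  qed (use dd fs in auto)
qed

lemma aut_Reg: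
  assumes s: "\<sigma> permutes A"
  shows "aut (Reg A) dsq (act \<sigma>) (act (inv \<sigma>))"
  unfolding aut_def
proof (intro conjI ballI)
  fix d assume "d \<in> Reg A"
  then show "act \<sigma> d \<in> Reg A" "act (inv \<sigma>) d \<in> Reg A" "act (inv \<sigma>) (act \<sigma> d) = d" "act \<sigma> (act (inv \<sigma>) d) = d"
    using act_Reg[OF s] act_Reg[OF permutes_inv[OF s]] act_inv1[OF s] act_inv2[OF s] by auto
next
  fix d e
  show "dsq (act \<sigma> d) (act \<sigma> e) \<longleftrightarrow> dsq d e"
    by (simp add: dsq_def act_def act_rel_mono_iff[OF s])
qed

lemma aut_SemiReg:
  assumes s: "\<sigma> permutes A"
  shows "aut (SemiReg A) dsub (act \<sigma>) (act (inv \<sigma>))"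
  unfolding aut_def
proof (intro conjI ballI)
  fix d assume "d \<in> SemiReg A"
  then show "act \<sigma> d \<in> SemiReg A" "act (inv \<sigma>) d \<in> SemiReg A" "act (inv \<sigma>) (act \<sigma> d) = d" "act \<sigma> (act (inv \<sigma>) d) = d"
    using act_SemiReg[OF s] act_SemiReg[OF permutes_inv[OF s]] act_inv1[OF s] act_inv2[OF s] by auto
next
  fix d e
  show "dsub (act \<sigma> d) (act \<sigma> e) \<longleftrightarrow> dsub d e"
    by (simp add: dsub_def act_def act_rel_mono_iff[OF s])
qed

lemma act_Fmap: "Fmap (act \<sigma> d) = act \<sigma> (Fmap d)"
  by (auto simp: Fmap_def act_def act_rel_def rdiff_def)

lemma aut_chain_max:
  assumes g: "gpo le" and a: "aut P le \<alpha> \<beta>" and c: "c \<in> pchains P le"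
  shows "chain_max le (\<alpha> ` c) = \<alpha> (chain_max le c)"
proof (rule chain_max_eq[OF g])
  have cP: "c \<subseteq> P" using pchainsD[OF c] by auto
  show "\<alpha> (chain_max le c) \<in> \<alpha> ` c" using chain_max(1)[OF g c] by blast
  show "\<forall>p\<in>\<alpha> ` c. le p (\<alpha> (chain_max le c))"
    using chain_max[OF g c] autD_le[OF a] cP by blast
qed

lemma aut_chain_min:
  assumes g: "gpo le" and a: "aut P le \<alpha> \<beta>" and c: "c \<in> pchains P le"
  shows "chain_min le (\<alpha> ` c) = \<alpha> (chain_min le c)"
proof (rule chain_min_eq[OF g])
  have cP: "c \<subseteq> P" using pchainsD[OF c] by auto
  show "\<alpha> (chain_min le c) \<in> \<alpha> ` c" using chain_min(1)[OF g c] by blast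
  show "\<forall>p\<in>\<alpha> ` c. le (\<alpha> (chain_min le c)) p"
    using chain_min[OF g c] autD_le[OF a] cP by blast
qed

lemma act_Gmap:
  assumes s: "\<sigma> permutes A" and c: "c \<in> pchains (Reg A) dsq"
  shows "Gmap (act \<sigma> ` c) = act \<sigma> (Gmap c)"
  unfolding Gmap_def aut_chain_max[OF gpo_dsq aut_Reg[OF s] c] aut_chain_min[OF gpo_dsq aut_Reg[OF s] c]
  by (simp add: act_def)

lemma act_GsdF:
  assumes finA: "finite A" and s: "\<sigma> permutes A" and c: "c \<in> pchains (SemiReg A) dsub"
  shows "Gmap (Fmap ` act \<sigma> ` c) = act \<sigma> (Gmap (Fmap ` c))"
proof -
  have "Fmap ` act \<sigma> ` c = act \<sigma> ` Fmap ` c" by (simp add: image_image act_Fmap)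
  then show ?thesis using act_Gmap[OF s sdF_pchain[OF finA c]] by simp
qed

lemma act_L:
  assumes s: "\<sigma> permutes A" and c: "c \<in> pchains (SemiReg A) dsub"
  shows "chain_max dsub (act \<sigma> ` c) = act \<sigma> (chain_max dsub c)"
  by (rule aut_chain_max[OF gpo_dsub aut_SemiReg[OF s] c])

lemma cont_rm_real:
  assumes "finite P" "finite Q" "f ` P \<subseteq> Q"
    and mono: "\<And>p p'. p \<in> P \<Longrightarrow> p' \<in> P \<Longrightarrow> le p p' \<Longrightarrow> le' (f p) (f p')"
  shows "continuous_map (top_of_set (realization P le)) (top_of_set (realization Q le')) (realize_map P f)"
  unfolding continuous_map_in_subtopology
proof
  have "continuous_map (top_of_set (realization P le)) euclidean (\<lambda>x. realize_map P f (id x))"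
    by (rule cont_rm[OF assms(1)]) (simp add: continuous_map_from_subtopology)
  then show "continuous_map (top_of_set (realization P le)) euclidean (realize_map P f)" by simp
  show "realize_map P f \<in> topspace (top_of_set (realization P le)) \<rightarrow> realization Q le'"
    using rm_real[of P Q f le le', OF assms(1-3) mono] by auto
qed

lemma bary_cont_map:
  assumes "finite P"
  shows "continuous_map (top_of_set (realization (pchains P le) (\<subseteq>))) (top_of_set (realization P le)) (bary P le)"
  using bary_homeo[OF assms] homeomorphic_imp_continuous_map by blast

lemma realization_pos_chain:
  assumes "finite P" "u \<in> realization (pchains P le) (\<subseteq>)" "0 < u c" "p \<in> c"
  shows "0 < bary P le u p"
proof -
  have c: "c \<in> pchains P le" using realization_pos_in[OF assms(2,3)] .
  have "0 < u c / real (card c)" using assms(3) pchains_card[OF c] by simp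
  also have "\<dots> \<le> bary P le u p" by (rule bary_ge[OF assms(1) _ c assms(4)]) (use realizationD(1)[OF assms(2)] in auto)
  finally show ?thesis .
qed

lemma homotopic_with_cong:
  assumes h: "homotopic_with P X Y f g"
    and f: "\<And>x. x \<in> topspace X \<Longrightarrow> f' x = f x" and g: "\<And>x. x \<in> topspace X \<Longrightarrow> g' x = g x"
    and loc: "\<And>h k. (\<And>x. x \<in> topspace X \<Longrightarrow> h x = k x) \<Longrightarrow> (P h \<longleftrightarrow> P k)"
  shows "homotopic_with P X Y f' g'"
proof -
  have th: "homotopic_with P X Y p q \<longleftrightarrow>
           (\<exists>h. continuous_map (prod_topology (top_of_set {0..1::real}) X) Y h \<and>
              (\<forall>x \<in> topspace X. h(0,x) = p x) \<and>
              (\<forall>x \<in> topspace X. h(1,x) = q x) \<and>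
              (\<forall>t \<in> {0..1}. P(\<lambda>x. h(t, x))))" for p q
    by (rule homotopic_with) (rule loc, blast)
  obtain k where k: "continuous_map (prod_topology (top_of_set {0..1::real}) X) Y k"
    "\<forall>x\<in>topspace X. k (0, x) = f x" "\<forall>x\<in>topspace X. k (1, x) = g x"
    "\<forall>t\<in>{0..1}. P (\<lambda>x. k (t, x))"
    using h th by blast
  show ?thesis unfolding th
    using k f g by (intro exI[of _ k]) auto
qed

abbreviation "SPc A \<equiv> pchains (SemiReg A) dsub"
abbreviation "SRc A \<equiv> pchains (Reg A) dsq"
abbreviation "XX A \<equiv> realization (SemiReg A) dsub"
abbreviation "YY A \<equiv> realization (Reg A) dsq"
abbreviation "ZZ A \<equiv> realization (SRc A) (\<subseteq>)"
abbreviation "WW A \<equiv> realization (SPc A) (\<subseteq>)"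
abbreviation "frX A \<equiv> realize_map (SemiReg A) Fmap"
abbreviation "grZ A \<equiv> realize_map (SRc A) Gmap"

lemma fins:
  assumes "finite A"
  shows "finite (Reg A)" "finite (SemiReg A)" "finite (SRc A)" "finite (SPc A)"
  using finite_Reg[OF assms] finite_SemiReg[OF assms] finite_pchains0 by blast+

lemma Fmap_img: "finite A \<Longrightarrow> Fmap ` SemiReg A \<subseteq> Reg A" using Fmap_Reg by blast
lemma Gmap_img: "Gmap ` SRc A \<subseteq> SemiReg A" using Gmap_SemiReg by blast

lemma cont_frX: "finite A \<Longrightarrow> continuous_map (top_of_set (XX A)) (top_of_set (YY A)) (frX A)"
  by (rule cont_rm_real[OF fins(2) fins(1) Fmap_img]) (auto intro: Fmap_mono)

lemma cont_grZ: "finite A \<Longrightarrow> continuous_map (top_of_set (ZZ A)) (top_of_set (XX A)) (grZ A)"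
  by (rule cont_rm_real[OF fins(3) fins(2) Gmap_img]) (auto intro: Gmap_mono)

lemma cont_hr: "finite A \<Longrightarrow> continuous_map (top_of_set (YY A)) (top_of_set (XX A)) (grZ A \<circ> ibary (Reg A) dsq)"
  by (rule continuous_map_compose[OF ibary_cont[OF fins(1)] cont_grZ])

lemma frX_equiv:
  assumes finA: "finite A" and s: "\<sigma> permutes A"
  shows "frX A (act_real (SemiReg A) \<sigma> t) = act_real (Reg A) \<sigma> (frX A t)"
proof -
  have a1: "act \<sigma> ` SemiReg A \<subseteq> SemiReg A" using act_SemiReg[OF s] by blast
  have "frX A (act_real (SemiReg A) \<sigma> t) = realize_map (SemiReg A) (Fmap \<circ> act \<sigma>) t"
    unfolding act_real_def by (rule rm_comp[OF fins(2)[OF finA] fins(2)[OF finA] a1])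
  also have "\<dots> = realize_map (SemiReg A) (act \<sigma> \<circ> Fmap) t"
    by (rule rm_cong) (simp add: act_Fmap)
  also have "\<dots> = act_real (Reg A) \<sigma> (frX A t)"
    unfolding act_real_def by (rule rm_comp[OF fins(2)[OF finA] fins(1)[OF finA] Fmap_img[OF finA], symmetric])
  finally show ?thesis .
qed

lemma grZ_equiv:
  assumes finA: "finite A" and s: "\<sigma> permutes A"
  shows "grZ A (realize_map (SRc A) ((`) (act \<sigma>)) u) = act_real (SemiReg A) \<sigma> (grZ A u)"
proof -
  have a1: "(`) (act \<sigma>) ` SRc A \<subseteq> SRc A" using autD(1)[OF aut_image[OF aut_Reg[OF s]]] by blast
  have a2: "act \<sigma> ` SemiReg A \<subseteq> SemiReg A" using act_SemiReg[OF s] by blast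
  have "grZ A (realize_map (SRc A) ((`) (act \<sigma>)) u) = realize_map (SRc A) (Gmap \<circ> (`) (act \<sigma>)) u"
    by (rule rm_comp[OF fins(3)[OF finA] fins(3)[OF finA] a1])
  also have "\<dots> = realize_map (SRc A) (act \<sigma> \<circ> Gmap) u"
    by (rule rm_cong) (simp add: act_Gmap[OF s])
  also have "\<dots> = act_real (SemiReg A) \<sigma> (grZ A u)"
    unfolding act_real_def by (rule rm_comp[OF fins(3)[OF finA] fins(2)[OF finA] Gmap_img, symmetric])
  finally show ?thesis .
qed

lemma hr_equiv:
  assumes finA: "finite A" and s: "\<sigma> permutes A" and t: "t \<in> YY A"
  shows "(grZ A \<circ> ibary (Reg A) dsq) (act_real (Reg A) \<sigma> t) = act_real (SemiReg A) \<sigma> ((grZ A \<circ> ibary (Reg A) dsq) t)"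
  using ibary_aut[OF fins(1)[OF finA] aut_Reg[OF s] t] grZ_equiv[OF finA s]
  by (simp add: act_real_def)

lemma act_real_in:
  assumes finA: "finite A" and s: "\<sigma> permutes A"
  shows "t \<in> XX A \<Longrightarrow> act_real (SemiReg A) \<sigma> t \<in> XX A"
    "t \<in> YY A \<Longrightarrow> act_real (Reg A) \<sigma> t \<in> YY A"
  unfolding act_real_def
  by (rule aut_real[OF fins(2)[OF finA] aut_SemiReg[OF s]], assumption)
     (rule aut_real[OF fins(1)[OF finA] aut_Reg[OF s]], assumption)

section \<open>Homotopy on Y\<close>

lemma Y_chain:
  assumes finA: "finite A" and x: "x \<in> YY A"
    and q: "0 < (frX A \<circ> (grZ A \<circ> ibary (Reg A) dsq)) x q \<or> 0 < x q"
    and q': "0 < (frX A \<circ> (grZ A \<circ> ibary (Reg A) dsq)) x q' \<or> 0 < x q'"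
  shows "dsq q q' \<or> dsq q' q"
proof -
  note fin = fins[OF finA]
  define u where "u = ibary (Reg A) dsq x"
  have u: "u \<in> ZZ A" "bary (Reg A) dsq u = x" using ibary_in[OF fin(1) x] unfolding u_def by auto
  have un: "\<And>c. 0 \<le> u c" using realizationD(1)[OF u(1)] .
  have FG: "(frX A \<circ> (grZ A \<circ> ibary (Reg A) dsq)) x = realize_map (SRc A) (\<lambda>c. Fmap (Gmap c)) u"
    using rm_comp[OF fin(3) fin(2) Gmap_img, of Fmap u] unfolding u_def by (simp add: o_def)
  have cpos: "0 < x e" if "0 < u c" "e \<in> c" for c e
    using realization_pos_chain[OF fin(1) u(1) that] u(2) by simp
  have cls: "(\<exists>c\<in>SRc A. 0 < u c \<and> r = Fmap (Gmap c)) \<or> (r \<in> Reg A \<and> 0 < x r)"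
    if "0 < (frX A \<circ> (grZ A \<circ> ibary (Reg A) dsq)) x r \<or> 0 < x r" for r
    using that
  proof
    assume "0 < (frX A \<circ> (grZ A \<circ> ibary (Reg A) dsq)) x r"
    then have "0 < realize_map (SRc A) (\<lambda>c. Fmap (Gmap c)) u r" using FG by simp
    then show ?thesis using rm_supp[of "SRc A" "\<lambda>c. Fmap (Gmap c)" u r, OF _ un fin(3)] by blast
  next
    assume "0 < x r"
    then show ?thesis using realization_pos_in[OF x] by blast
  qed
  have xx: "dsq e e' \<or> dsq e' e" if "0 < x e" "0 < x e'" for e e' using realizationD(4)[OF x that] .
  have FGc: "dsq e (Fmap (Gmap c)) \<or> dsq (Fmap (Gmap c)) e" if "c \<in> SRc A" "0 < u c" "e \<in> Reg A" "0 < x e" for c e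
  proof (rule FG_comp[OF that(1) that(3)])
    fix y assume "y \<in> c"
    then show "dsq e y \<or> dsq y e" using xx[OF that(4) cpos[OF that(2) \<open>y \<in> c\<close>]] by blast
  qed
  have GG: "dsq (Fmap (Gmap c)) (Fmap (Gmap c'))" if "c \<in> SRc A" "c' \<in> SRc A" "c \<subseteq> c'" for c c'
    by (rule Fmap_mono[OF Gmap_SemiReg[OF that(1)] Gmap_SemiReg[OF that(2)] Gmap_mono[OF that]])
  from cls[OF q] cls[OF q'] show ?thesis
  proof (elim disjE bexE conjE)
    fix c c' assume h: "c \<in> SRc A" "0 < u c" "q = Fmap (Gmap c)" "c' \<in> SRc A" "0 < u c'" "q' = Fmap (Gmap c')"
    have "c \<subseteq> c' \<or> c' \<subseteq> c" using realizationD(4)[OF u(1) h(2) h(5)] .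
    then show ?thesis using GG h by blast
  next
    fix c assume h: "c \<in> SRc A" "0 < u c" "q = Fmap (Gmap c)" "q' \<in> Reg A" "0 < x q'"
    show ?thesis using FGc[OF h(1,2,4,5)] h(3) by blast
  next
    fix c assume h: "q \<in> Reg A" "0 < x q" "c \<in> SRc A" "0 < u c" "q' = Fmap (Gmap c)"
    show ?thesis using FGc[OF h(3,4,1,2)] h(5) by blast
  next
    assume "q \<in> Reg A" "0 < x q" "q' \<in> Reg A" "0 < x q'"
    then show ?thesis using xx by blast
  qed
qed

lemma Y_htpy:
  assumes finA: "finite A"
  shows "homotopic_with (\<lambda>k. \<forall>\<sigma>. \<sigma> permutes A \<longrightarrow>
           (\<forall>t\<in>topspace (top_of_set (YY A)). k (act_real (Reg A) \<sigma> t) = act_real (Reg A) \<sigma> (k t)))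
         (top_of_set (YY A)) (top_of_set (YY A)) (frX A \<circ> (grZ A \<circ> ibary (Reg A) dsq)) id"
proof (rule lin_htpy)
  show "continuous_map (top_of_set (YY A)) (top_of_set (YY A)) (frX A \<circ> (grZ A \<circ> ibary (Reg A) dsq))"
    by (rule continuous_map_compose[OF cont_hr[OF finA] cont_frX[OF finA]])
  show "continuous_map (top_of_set (YY A)) (top_of_set (YY A)) id" by simp
  fix x q q' assume "x \<in> topspace (top_of_set (YY A))"
    "0 < (frX A \<circ> (grZ A \<circ> ibary (Reg A) dsq)) x q \<or> 0 < id x q"
    "0 < (frX A \<circ> (grZ A \<circ> ibary (Reg A) dsq)) x q' \<or> 0 < id x q'"
  then show "dsq q q' \<or> dsq q' q" using Y_chain[OF finA] by simp
next
  fix s :: real assume "s \<in> {0..1}"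
  show "\<forall>\<sigma>. \<sigma> permutes A \<longrightarrow>
           (\<forall>t\<in>topspace (top_of_set (YY A)).
             (\<lambda>x q. (1 - s) * (frX A \<circ> (grZ A \<circ> ibary (Reg A) dsq)) x q + s * id x q) (act_real (Reg A) \<sigma> t) =
             act_real (Reg A) \<sigma> ((\<lambda>x q. (1 - s) * (frX A \<circ> (grZ A \<circ> ibary (Reg A) dsq)) x q + s * id x q) t))"
  proof (intro allI impI ballI)
    fix \<sigma> t assume s: "\<sigma> permutes A" and t: "t \<in> topspace (top_of_set (YY A))"
    have e: "(frX A \<circ> (grZ A \<circ> ibary (Reg A) dsq)) (act_real (Reg A) \<sigma> t) =
        act_real (Reg A) \<sigma> ((frX A \<circ> (grZ A \<circ> ibary (Reg A) dsq)) t)"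
      using hr_equiv[OF finA s] frX_equiv[OF finA s] t by simp
    show "(\<lambda>x q. (1 - s) * (frX A \<circ> (grZ A \<circ> ibary (Reg A) dsq)) x q + s * id x q) (act_real (Reg A) \<sigma> t) =
             act_real (Reg A) \<sigma> ((\<lambda>x q. (1 - s) * (frX A \<circ> (grZ A \<circ> ibary (Reg A) dsq)) x q + s * id x q) t)"
      unfolding act_real_def rm_lin using e unfolding act_real_def by simp
  qed
qed

abbreviation "ipX A \<equiv> ibary (SemiReg A) dsub"
abbreviation "irY A \<equiv> ibary (Reg A) dsq"
abbreviation "bP A \<equiv> bary (SemiReg A) dsub"
abbreviation "bR A \<equiv> bary (Reg A) dsq"
abbreviation "Lm A \<equiv> realize_map (SPc A) (chain_max dsub)"
abbreviation "GFm A \<equiv> realize_map (SPc A) (\<lambda>c. Gmap (Fmap ` c))"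
abbreviation "sdFm A \<equiv> realize_map (SPc A) ((`) Fmap)"
abbreviation "actW A \<sigma> \<equiv> realize_map (SPc A) ((`) (act \<sigma>))"
abbreviation "actZ A \<sigma> \<equiv> realize_map (SRc A) ((`) (act \<sigma>))"

abbreviation PX :: "'a set \<Rightarrow> (('a dord \<Rightarrow> real) \<Rightarrow> ('a dord \<Rightarrow> real)) \<Rightarrow> bool" where
  "PX A \<equiv> (\<lambda>k. \<forall>\<sigma>. \<sigma> permutes A \<longrightarrow>
           (\<forall>t\<in>topspace (top_of_set (XX A)). k (act_real (SemiReg A) \<sigma> t) = act_real (SemiReg A) \<sigma> (k t)))"

lemma PX_loc:
  assumes finA: "finite A" and hk: "\<And>x. x \<in> topspace (top_of_set (XX A)) \<Longrightarrow> h x = k x"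
  shows "PX A h \<longleftrightarrow> PX A k"
proof -
  have e: "h (act_real (SemiReg A) \<sigma> t) = k (act_real (SemiReg A) \<sigma> t)" "h t = k t"
    if "\<sigma> permutes A" "t \<in> topspace (top_of_set (XX A))" for \<sigma> t
    using hk act_real_in(1)[OF finA that(1)] that(2) by simp_all
  show ?thesis
  proof
    assume H: "PX A h"
    show "PX A k"
    proof (intro allI impI ballI)
      fix \<sigma> t assume a: "\<sigma> permutes A" "t \<in> topspace (top_of_set (XX A))"
      show "k (act_real (SemiReg A) \<sigma> t) = act_real (SemiReg A) \<sigma> (k t)"
        using H a e[OF a] by metis
    qed
  next
    assume H: "PX A k"
    show "PX A h"
    proof (intro allI impI ballI)
      fix \<sigma> t assume a: "\<sigma> permutes A" "t \<in> topspace (top_of_set (XX A))"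
      show "h (act_real (SemiReg A) \<sigma> t) = act_real (SemiReg A) \<sigma> (h t)"
        using H a e[OF a] by metis
    qed
  qed
qed

lemma Lm_img: "chain_max dsub ` SPc A \<subseteq> SemiReg A" using semi_chain_facts by blast
lemma GF_img: "finite A \<Longrightarrow> (\<lambda>c. Gmap (Fmap ` c)) ` SPc A \<subseteq> SemiReg A"
  using Gmap_SemiReg sdF_pchain by blast
lemma sdF_img: "finite A \<Longrightarrow> (`) Fmap ` SPc A \<subseteq> SRc A" using sdF_pchain by blast
lemma actW_img: "\<sigma> permutes A \<Longrightarrow> (`) (act \<sigma>) ` SPc A \<subseteq> SPc A"
  using autD(1)[OF aut_image[OF aut_SemiReg]] by blast

lemma cont_Lm: "finite A \<Longrightarrow> continuous_map (top_of_set (WW A)) (top_of_set (XX A)) (Lm A)"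
  by (rule cont_rm_real[OF fins(4) fins(2) Lm_img]) (auto intro: L_mono)
lemma cont_GFm: "finite A \<Longrightarrow> continuous_map (top_of_set (WW A)) (top_of_set (XX A)) (GFm A)"
  by (rule cont_rm_real[OF fins(4) fins(2) GF_img]) (auto intro: GF_mono)
lemma cont_sdFm: "finite A \<Longrightarrow> continuous_map (top_of_set (WW A)) (top_of_set (ZZ A)) (sdFm A)"
  by (rule cont_rm_real[OF fins(4) fins(3) sdF_img]) auto

lemma ip_equiv: "finite A \<Longrightarrow> \<sigma> permutes A \<Longrightarrow> t \<in> XX A \<Longrightarrow>
    ipX A (act_real (SemiReg A) \<sigma> t) = actW A \<sigma> (ipX A t)"
  unfolding act_real_def by (rule ibary_aut[OF fins(2) aut_SemiReg])

lemma Lm_equiv: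
  assumes finA: "finite A" and s: "\<sigma> permutes A"
  shows "Lm A (actW A \<sigma> u) = act_real (SemiReg A) \<sigma> (Lm A u)"
proof -
  have "Lm A (actW A \<sigma> u) = realize_map (SPc A) (chain_max dsub \<circ> (`) (act \<sigma>)) u"
    by (rule rm_comp[OF fins(4)[OF finA] fins(4)[OF finA] actW_img[OF s]])
  also have "\<dots> = realize_map (SPc A) (act \<sigma> \<circ> chain_max dsub) u"
    by (rule rm_cong) (simp add: act_L[OF s])
  also have "\<dots> = act_real (SemiReg A) \<sigma> (Lm A u)"
    unfolding act_real_def by (rule rm_comp[OF fins(4)[OF finA] fins(2)[OF finA] Lm_img, symmetric])
  finally show ?thesis .
qed

lemma GFm_equiv:
  assumes finA: "finite A" and s: "\<sigma> permutes A"
  shows "GFm A (actW A \<sigma> u) = act_real (SemiReg A) \<sigma> (GFm A u)"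
proof -
  have "GFm A (actW A \<sigma> u) = realize_map (SPc A) ((\<lambda>c. Gmap (Fmap ` c)) \<circ> (`) (act \<sigma>)) u"
    by (rule rm_comp[OF fins(4)[OF finA] fins(4)[OF finA] actW_img[OF s]])
  also have "\<dots> = realize_map (SPc A) (act \<sigma> \<circ> (\<lambda>c. Gmap (Fmap ` c))) u"
    by (rule rm_cong) (simp add: act_GsdF[OF finA s])
  also have "\<dots> = act_real (SemiReg A) \<sigma> (GFm A u)"
    unfolding act_real_def by (rule rm_comp[OF fins(4)[OF finA] fins(2)[OF finA] GF_img[OF finA], symmetric])
  finally show ?thesis .
qed

lemma sdFm_equiv:
  assumes finA: "finite A" and s: "\<sigma> permutes A"
  shows "sdFm A (actW A \<sigma> u) = actZ A \<sigma> (sdFm A u)"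
proof -
  have "sdFm A (actW A \<sigma> u) = realize_map (SPc A) ((`) Fmap \<circ> (`) (act \<sigma>)) u"
    by (rule rm_comp[OF fins(4)[OF finA] fins(4)[OF finA] actW_img[OF s]])
  also have "\<dots> = realize_map (SPc A) ((`) (act \<sigma>) \<circ> (`) Fmap) u"
    by (rule rm_cong) (simp add: image_image act_Fmap)
  also have "\<dots> = actZ A \<sigma> (sdFm A u)"
    by (rule rm_comp[OF fins(4)[OF finA] fins(3)[OF finA] sdF_img[OF finA], symmetric])
  finally show ?thesis .
qed

lemma bR_equiv: "finite A \<Longrightarrow> \<sigma> permutes A \<Longrightarrow> bR A (actZ A \<sigma> v) = act_real (Reg A) \<sigma> (bR A v)"
  unfolding act_real_def by (rule bary_aut[OF fins(1) aut_Reg])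

lemma bP_equiv: "finite A \<Longrightarrow> \<sigma> permutes A \<Longrightarrow> bP A (actW A \<sigma> v) = act_real (SemiReg A) \<sigma> (bP A v)"
  unfolding act_real_def by (rule bary_aut[OF fins(2) aut_SemiReg])

lemma actW_in: "finite A \<Longrightarrow> \<sigma> permutes A \<Longrightarrow> u \<in> WW A \<Longrightarrow> actW A \<sigma> u \<in> WW A"
  by (rule aut_real[OF fins(4) aut_image[OF aut_SemiReg]])

lemma H1:
  assumes finA: "finite A"
  shows "homotopic_with (PX A) (top_of_set (XX A)) (top_of_set (XX A)) id (Lm A \<circ> ipX A)"
proof (rule lin_htpy)
  note fin = fins[OF finA]
  show "continuous_map (top_of_set (XX A)) (top_of_set (XX A)) id" by simp
  show "continuous_map (top_of_set (XX A)) (top_of_set (XX A)) (Lm A \<circ> ipX A)"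
    by (rule continuous_map_compose[OF ibary_cont[OF fin(2)] cont_Lm[OF finA]])
  have pos: "0 < x q" if x: "x \<in> XX A" and q: "0 < id x q \<or> 0 < (Lm A \<circ> ipX A) x q" for x q
    using q
  proof
    assume "0 < (Lm A \<circ> ipX A) x q"
    then have "0 < Lm A (ipX A x) q" by simp
    moreover have u: "ipX A x \<in> WW A" "bP A (ipX A x) = x" using ibary_in[OF fin(2) x] by auto
    ultimately obtain c where c: "c \<in> SPc A" "chain_max dsub c = q" "0 < ipX A x c"
      using rm_supp[of "SPc A" "chain_max dsub" "ipX A x" q, OF _ _ fin(4)] realizationD(1)[OF u(1)] by blast
    have "q \<in> c" using semi_chain_facts(1)[OF c(1)] c(2) by simp
    then show "0 < x q" using realization_pos_chain[OF fin(2) u(1) c(3)] u(2) by simp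
  qed simp
  fix x q q' assume a: "x \<in> topspace (top_of_set (XX A))" "0 < id x q \<or> 0 < (Lm A \<circ> ipX A) x q"
    "0 < id x q' \<or> 0 < (Lm A \<circ> ipX A) x q'"
  have x: "x \<in> XX A" using a(1) by simp
  have pq: "0 < x q" "0 < x q'" using pos[OF x a(2)] pos[OF x a(3)] by blast+
  show "dsub q q' \<or> dsub q' q" by (rule realizationD(4)[OF x pq])
next
  fix s :: real assume "s \<in> {0..1}"
  show "PX A (\<lambda>x q. (1 - s) * id x q + s * (Lm A \<circ> ipX A) x q)"
  proof (intro allI impI ballI)
    fix \<sigma> t assume s: "\<sigma> permutes A" and t: "t \<in> topspace (top_of_set (XX A))"
    have e: "(Lm A \<circ> ipX A) (act_real (SemiReg A) \<sigma> t) = act_real (SemiReg A) \<sigma> ((Lm A \<circ> ipX A) t)"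
      using ip_equiv[OF finA s] Lm_equiv[OF finA s] t by simp
    show "(\<lambda>x q. (1 - s) * id x q + s * (Lm A \<circ> ipX A) x q) (act_real (SemiReg A) \<sigma> t) =
        act_real (SemiReg A) \<sigma> ((\<lambda>x q. (1 - s) * id x q + s * (Lm A \<circ> ipX A) x q) t)"
      using e unfolding act_real_def rm_lin by simp
  qed
qed

lemma H2:
  assumes finA: "finite A"
  shows "homotopic_with (PX A) (top_of_set (XX A)) (top_of_set (XX A)) (GFm A \<circ> ipX A) (Lm A \<circ> ipX A)"
proof -
  note fin = fins[OF finA]
  let ?PW = "\<lambda>k. \<forall>\<sigma>. \<sigma> permutes A \<longrightarrow> (\<forall>u\<in>WW A. k (actW A \<sigma> u) = act_real (SemiReg A) \<sigma> (k u))"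
  have S: "homotopic_with ?PW (top_of_set (WW A)) (top_of_set (XX A)) (GFm A) (Lm A)"
  proof (rule sweep_htpy[OF fin(4) fin(2) gpo_subset gpo_dsub GF_img[OF finA] Lm_img])
    fix c c' assume "c \<in> SPc A" "c' \<in> SPc A" "c \<subseteq> c'"
    then show "dsub (Gmap (Fmap ` c)) (Gmap (Fmap ` c'))" "dsub (chain_max dsub c) (chain_max dsub c')"
      using GF_mono[OF finA] L_mono by blast+
  next
    fix c assume "c \<in> SPc A"
    then show "dsub (Gmap (Fmap ` c)) (chain_max dsub c)" by (rule GF_le_L[OF finA])
  next
    fix h k :: "('a dord set \<Rightarrow> real) \<Rightarrow> ('a dord \<Rightarrow> real)"
    assume hk: "\<And>x. x \<in> WW A \<Longrightarrow> h x = k x"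
    have e: "h (actW A \<sigma> u) = k (actW A \<sigma> u)" "h u = k u" if "\<sigma> permutes A" "u \<in> WW A" for \<sigma> u
      using hk actW_in[OF finA that] that(2) by simp_all
    show "?PW h \<longleftrightarrow> ?PW k"
    proof
      assume H: "?PW h"
      show "?PW k"
      proof (intro allI impI ballI)
        fix \<sigma> u assume a: "\<sigma> permutes A" "u \<in> WW A"
        show "k (actW A \<sigma> u) = act_real (SemiReg A) \<sigma> (k u)" using H a e[OF a] by metis
      qed
    next
      assume H: "?PW k"
      show "?PW h"
      proof (intro allI impI ballI)
        fix \<sigma> u assume a: "\<sigma> permutes A" "u \<in> WW A"
        show "h (actW A \<sigma> u) = act_real (SemiReg A) \<sigma> (h u)" using H a e[OF a] by metis
      qed
    qed
  next
    fix s :: real assume "s \<in> {0..1}"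
    show "?PW (sweep (SPc A) (\<subseteq>) (\<lambda>c. Gmap (Fmap ` c)) (chain_max dsub) s)"
    proof (intro allI impI ballI)
      fix \<sigma> u assume s: "\<sigma> permutes A" and u: "u \<in> WW A"
      show "sweep (SPc A) (\<subseteq>) (\<lambda>c. Gmap (Fmap ` c)) (chain_max dsub) s (actW A \<sigma> u) =
          act_real (SemiReg A) \<sigma> (sweep (SPc A) (\<subseteq>) (\<lambda>c. Gmap (Fmap ` c)) (chain_max dsub) s u)"
        unfolding act_real_def
        by (rule sweep_aut[OF fin(4) fin(2) aut_image[OF aut_SemiReg[OF s]] GF_img[OF finA] Lm_img])
           (simp_all add: act_GsdF[OF finA s] act_L[OF s])
    qed
  qed
  show ?thesis
  proof (rule homotopic_with_compose_continuous_map_right[OF S ibary_cont[OF fin(2)]])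
    fix j assume j: "?PW j"
    show "PX A (j \<circ> ipX A)"
    proof (intro allI impI ballI)
      fix \<sigma> t assume s: "\<sigma> permutes A" and t: "t \<in> topspace (top_of_set (XX A))"
      have "ipX A t \<in> WW A" using ibary_in[OF fin(2)] t by auto
      then show "(j \<circ> ipX A) (act_real (SemiReg A) \<sigma> t) = act_real (SemiReg A) \<sigma> ((j \<circ> ipX A) t)"
        using ip_equiv[OF finA s] j s t by simp
    qed
  qed
qed

lemma A_chain:
  assumes finA: "finite A" and u: "u \<in> WW A"
    and q: "0 < (bR A \<circ> sdFm A) u q \<or> 0 < (frX A \<circ> bP A) u q"
    and q': "0 < (bR A \<circ> sdFm A) u q' \<or> 0 < (frX A \<circ> bP A) u q'"
  shows "dsq q q' \<or> dsq q' q"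
proof -
  note fin = fins[OF finA]
  have un: "\<And>c. 0 \<le> u c" using realizationD(1)[OF u] .
  have sdn: "\<And>c. 0 \<le> sdFm A u c" using rm_nonneg[of u "SPc A" "(`) Fmap", OF un] .
  have cls: "\<exists>c\<in>SPc A. 0 < u c \<and> (\<exists>d\<in>c. r = Fmap d)"
    if "0 < (bR A \<circ> sdFm A) u r \<or> 0 < (frX A \<circ> bP A) u r" for r
    using that
  proof
    assume "0 < (bR A \<circ> sdFm A) u r"
    then have "0 < bR A (sdFm A u) r" by simp
    then obtain c' where c': "c' \<in> SRc A" "r \<in> c'" "sdFm A u c' \<noteq> 0" using bary_pos[OF _ fin(1)] by blast
    then have "0 < sdFm A u c'" using sdn[of c'] by simp
    then obtain c where "c \<in> SPc A" "Fmap ` c = c'" "0 < u c"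
      using rm_supp[of "SPc A" "(`) Fmap" u c', OF _ un fin(4)] by blast
    then show ?thesis using c'(2) by blast
  next
    assume "0 < (frX A \<circ> bP A) u r"
    then have "0 < frX A (bP A u) r" by simp
    moreover have "\<And>d. 0 \<le> bP A u d" using bary_nonneg[OF un] .
    ultimately obtain d where d: "d \<in> SemiReg A" "Fmap d = r" "0 < bP A u d"
      using rm_supp[of "SemiReg A" Fmap "bP A u" r, OF _ _ fin(2)] by blast
    then have "d \<in> \<Union>{c \<in> SPc A. 0 < u c}" using supp_bary[OF fin(2) realization_nsup[OF u]] by blast
    then show ?thesis using d(2) by blast
  qed
  obtain c d where c: "c \<in> SPc A" "0 < u c" "d \<in> c" "q = Fmap d" using cls[OF q] by blast
  obtain c' d' where c': "c' \<in> SPc A" "0 < u c'" "d' \<in> c'" "q' = Fmap d'" using cls[OF q'] by blast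
  have "c \<subseteq> c' \<or> c' \<subseteq> c" using realizationD(4)[OF u c(2) c'(2)] .
  then have "dsub d d' \<or> dsub d' d" using pchainsD[OF c(1)] pchainsD[OF c'(1)] c(3) c'(3) by blast
  moreover have "d \<in> SemiReg A" "d' \<in> SemiReg A" using pchainsD[OF c(1)] pchainsD[OF c'(1)] c(3) c'(3) by blast+
  ultimately show ?thesis using Fmap_mono c(4) c'(4) by blast
qed

lemma H3:
  assumes finA: "finite A"
  shows "homotopic_with (PX A) (top_of_set (XX A)) (top_of_set (XX A)) (GFm A \<circ> ipX A)
      ((grZ A \<circ> irY A) \<circ> frX A)"
proof -
  note fin = fins[OF finA]
  let ?f = "bR A \<circ> sdFm A" and ?g = "frX A \<circ> bP A"
  let ?PA = "\<lambda>k. (\<forall>u\<in>WW A. k u \<in> YY A) \<and>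
     (\<forall>\<sigma>. \<sigma> permutes A \<longrightarrow> (\<forall>u\<in>WW A. k (actW A \<sigma> u) = act_real (Reg A) \<sigma> (k u)))"
  let ?PB = "\<lambda>k. \<forall>\<sigma>. \<sigma> permutes A \<longrightarrow> (\<forall>u\<in>WW A. k (actW A \<sigma> u) = actZ A \<sigma> (k u))"
  let ?PC = "\<lambda>k. \<forall>\<sigma>. \<sigma> permutes A \<longrightarrow> (\<forall>u\<in>WW A. k (actW A \<sigma> u) = act_real (SemiReg A) \<sigma> (k u))"
  have cf: "continuous_map (top_of_set (WW A)) (top_of_set (YY A)) ?f"
    by (rule continuous_map_compose[OF cont_sdFm[OF finA] bary_cont_map[OF fin(1)]])
  have cg: "continuous_map (top_of_set (WW A)) (top_of_set (YY A)) ?g"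
    by (rule continuous_map_compose[OF bary_cont_map[OF fin(2)] cont_frX[OF finA]])
  have fe: "?f (actW A \<sigma> u) = act_real (Reg A) \<sigma> (?f u)" if "\<sigma> permutes A" for \<sigma> u
    using sdFm_equiv[OF finA that] bR_equiv[OF finA that] by simp
  have ge: "?g (actW A \<sigma> u) = act_real (Reg A) \<sigma> (?g u)" if "\<sigma> permutes A" for \<sigma> u
    using bP_equiv[OF finA that] frX_equiv[OF finA that] by simp
  have fin_f: "?f u \<in> YY A" "?g u \<in> YY A" if "u \<in> WW A" for u
    using continuous_map_image_subset_topspace[OF cf] continuous_map_image_subset_topspace[OF cg] that by auto
  have HA: "homotopic_with ?PA (top_of_set (WW A)) (top_of_set (YY A)) ?f ?g"
  proof (rule lin_htpy[OF cf cg])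
    fix x q q' assume "x \<in> topspace (top_of_set (WW A))" "0 < ?f x q \<or> 0 < ?g x q" "0 < ?f x q' \<or> 0 < ?g x q'"
    then show "dsq q q' \<or> dsq q' q" using A_chain[OF finA] by simp
  next
    fix s :: real assume s01: "s \<in> {0..1}"
    show "?PA (\<lambda>x q. (1 - s) * ?f x q + s * ?g x q)"
    proof (intro conjI allI impI ballI)
      fix u assume u: "u \<in> WW A"
      show "(\<lambda>q. (1 - s) * ?f u q + s * ?g u q) \<in> YY A"
        by (rule real_convex[OF fin_f[OF u]]) (use s01 A_chain[OF finA u] in auto)
    next
      fix \<sigma> u assume s: "\<sigma> permutes A" and u: "u \<in> WW A"
      show "(\<lambda>q. (1 - s) * ?f (actW A \<sigma> u) q + s * ?g (actW A \<sigma> u) q) =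
          act_real (Reg A) \<sigma> (\<lambda>q. (1 - s) * ?f u q + s * ?g u q)"
        unfolding fe[OF s] ge[OF s] unfolding act_real_def rm_lin by simp
    qed
  qed
  have HB: "homotopic_with ?PB (top_of_set (WW A)) (top_of_set (ZZ A)) (irY A \<circ> ?f) (irY A \<circ> ?g)"
  proof (rule homotopic_with_compose_continuous_map_left[OF HA ibary_cont[OF fin(1)]])
    fix j assume j: "?PA j"
    show "?PB (irY A \<circ> j)"
    proof (intro allI impI ballI)
      fix \<sigma> u assume s: "\<sigma> permutes A" and u: "u \<in> WW A"
      have "j u \<in> YY A" using j u by blast
      then show "(irY A \<circ> j) (actW A \<sigma> u) = actZ A \<sigma> ((irY A \<circ> j) u)"
        using j s u ibary_aut[OF fin(1) aut_Reg[OF s]] by (simp add: act_real_def)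
    qed
  qed
  have HC: "homotopic_with ?PC (top_of_set (WW A)) (top_of_set (XX A)) (grZ A \<circ> (irY A \<circ> ?f)) (grZ A \<circ> (irY A \<circ> ?g))"
  proof (rule homotopic_with_compose_continuous_map_left[OF HB cont_grZ[OF finA]])
    fix j assume j: "?PB j"
    show "?PC (grZ A \<circ> j)"
    proof (intro allI impI ballI)
      fix \<sigma> u assume s: "\<sigma> permutes A" and u: "u \<in> WW A"
      show "(grZ A \<circ> j) (actW A \<sigma> u) = act_real (SemiReg A) \<sigma> ((grZ A \<circ> j) u)"
        using j s u grZ_equiv[OF finA s] by simp
    qed
  qed
  have HD: "homotopic_with (PX A) (top_of_set (XX A)) (top_of_set (XX A))
      ((grZ A \<circ> (irY A \<circ> ?f)) \<circ> ipX A) ((grZ A \<circ> (irY A \<circ> ?g)) \<circ> ipX A)"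
  proof (rule homotopic_with_compose_continuous_map_right[OF HC ibary_cont[OF fin(2)]])
    fix j assume j: "?PC j"
    show "PX A (j \<circ> ipX A)"
    proof (intro allI impI ballI)
      fix \<sigma> t assume s: "\<sigma> permutes A" and t: "t \<in> topspace (top_of_set (XX A))"
      have "ipX A t \<in> WW A" using ibary_in[OF fin(2)] t by auto
      then show "(j \<circ> ipX A) (act_real (SemiReg A) \<sigma> t) = act_real (SemiReg A) \<sigma> ((j \<circ> ipX A) t)"
        using ip_equiv[OF finA s] j s t by simp
    qed
  qed
  show ?thesis
  proof (rule homotopic_with_cong[OF HD])
    fix t assume t: "t \<in> topspace (top_of_set (XX A))"
    have ip: "ipX A t \<in> WW A" "bP A (ipX A t) = t" using ibary_in[OF fin(2)] t by auto
    have v: "sdFm A (ipX A t) \<in> ZZ A"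
      using continuous_map_image_subset_topspace[OF cont_sdFm[OF finA]] ip(1) by auto
    have "(grZ A \<circ> (irY A \<circ> ?f) \<circ> ipX A) t = grZ A (sdFm A (ipX A t))"
      using ibary_bary[OF fin(1) v] by simp
    also have "\<dots> = GFm A (ipX A t)"
      using rm_comp[OF fin(4) fin(3) sdF_img[OF finA], of Gmap "ipX A t"] by (simp add: o_def)
    finally show "(GFm A \<circ> ipX A) t = (grZ A \<circ> (irY A \<circ> ?f) \<circ> ipX A) t" by simp
    show "(grZ A \<circ> irY A \<circ> frX A) t = (grZ A \<circ> (irY A \<circ> ?g) \<circ> ipX A) t"
      using ip(2) by simp
  next
    fix h k :: "('a dord \<Rightarrow> real) \<Rightarrow> ('a dord \<Rightarrow> real)"
    assume "\<And>x. x \<in> topspace (top_of_set (XX A)) \<Longrightarrow> h x = k x"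
    then show "PX A h \<longleftrightarrow> PX A k" by (rule PX_loc[OF finA])
  qed
qed

lemma X_htpy:
  assumes finA: "finite A"
  shows "homotopic_with (PX A) (top_of_set (XX A)) (top_of_set (XX A)) ((grZ A \<circ> irY A) \<circ> frX A) id"
proof -
  have "homotopic_with (PX A) (top_of_set (XX A)) (top_of_set (XX A)) id (GFm A \<circ> ipX A)"
    using homotopic_with_trans[OF H1[OF finA] homotopic_with_symD[OF H2[OF finA]]] .
  then have "homotopic_with (PX A) (top_of_set (XX A)) (top_of_set (XX A)) id ((grZ A \<circ> irY A) \<circ> frX A)"
    using homotopic_with_trans H3[OF finA] by blast
  then show ?thesis by (rule homotopic_with_symD)
qed

theorem proposition4p8:
  fixes A :: "'a set"
  assumes "finite A"
  defines "X \<equiv> top_of_set (realization (SemiReg A) dsub)"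
      and "Y \<equiv> top_of_set (realization (Reg A) dsq)"
      and "Z \<equiv> top_of_set (realization (pchains (Reg A) dsq) (\<subseteq>))"
      and "Fr \<equiv> realize_map (SemiReg A) Fmap"
      and "Hr \<equiv> realize_map (pchains (Reg A) dsq) Gmap \<circ>
                 inv_into (realization (pchains (Reg A) dsq) (\<subseteq>)) (bary (Reg A) dsq)"
  shows "Fmap ` SemiReg A \<subseteq> Reg A \<and> monotone_on (SemiReg A) dsub dsq Fmap
    \<and> Gmap ` pchains (Reg A) dsq \<subseteq> SemiReg A
    \<and> monotone_on (pchains (Reg A) dsq) (\<subseteq>) dsub Gmap
    \<and> homeomorphic_map Z Y (bary (Reg A) dsq)
    \<and> continuous_map X Y Fr \<and> continuous_map Y X Hr
    \<and> (\<forall>\<sigma>. \<sigma> permutes A \<longrightarrow>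
         (\<forall>t\<in>topspace X. Fr (act_real (SemiReg A) \<sigma> t) = act_real (Reg A) \<sigma> (Fr t)) \<and>
         (\<forall>t\<in>topspace Y. Hr (act_real (Reg A) \<sigma> t) = act_real (SemiReg A) \<sigma> (Hr t)))
    \<and> homotopic_with (\<lambda>k. \<forall>\<sigma>. \<sigma> permutes A \<longrightarrow>
           (\<forall>t\<in>topspace X. k (act_real (SemiReg A) \<sigma> t) = act_real (SemiReg A) \<sigma> (k t)))
         X X (Hr \<circ> Fr) id
    \<and> homotopic_with (\<lambda>k. \<forall>\<sigma>. \<sigma> permutes A \<longrightarrow>
           (\<forall>t\<in>topspace Y. k (act_real (Reg A) \<sigma> t) = act_real (Reg A) \<sigma> (k t)))
         Y Y (Fr \<circ> Hr) id"
proof -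
  have Hr_eq: "Hr = grZ A \<circ> irY A" unfolding Hr_def ibary_def ..
  have tX: "topspace X = XX A" unfolding X_def by simp
  have tY: "topspace Y = YY A" unfolding Y_def by simp
  have c1: "Fmap ` SemiReg A \<subseteq> Reg A" by (rule Fmap_img[OF assms(1)])
  have c2: "monotone_on (SemiReg A) dsub dsq Fmap"
    by (rule monotone_onI) (rule Fmap_mono)
  have c3: "Gmap ` pchains (Reg A) dsq \<subseteq> SemiReg A" by (rule Gmap_img)
  have c4: "monotone_on (pchains (Reg A) dsq) (\<subseteq>) dsub Gmap"
    by (rule monotone_onI) (rule Gmap_mono)
  have c5: "homeomorphic_map Z Y (bary (Reg A) dsq)"
    unfolding Z_def Y_def by (rule bary_homeo[OF fins(1)[OF assms(1)]])
  have c6: "continuous_map X Y Fr" unfolding X_def Y_def Fr_def by (rule cont_frX[OF assms(1)])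
  have c7: "continuous_map Y X Hr" unfolding X_def Y_def Hr_eq by (rule cont_hr[OF assms(1)])
  have c8: "\<forall>\<sigma>. \<sigma> permutes A \<longrightarrow>
         (\<forall>t\<in>topspace X. Fr (act_real (SemiReg A) \<sigma> t) = act_real (Reg A) \<sigma> (Fr t)) \<and>
         (\<forall>t\<in>topspace Y. Hr (act_real (Reg A) \<sigma> t) = act_real (SemiReg A) \<sigma> (Hr t))"
    unfolding tX tY Fr_def Hr_eq using frX_equiv[OF assms(1)] hr_equiv[OF assms(1)] by blast
  have c9: "homotopic_with (\<lambda>k. \<forall>\<sigma>. \<sigma> permutes A \<longrightarrow>
           (\<forall>t\<in>topspace X. k (act_real (SemiReg A) \<sigma> t) = act_real (SemiReg A) \<sigma> (k t)))
         X X (Hr \<circ> Fr) id"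
    unfolding X_def Hr_eq Fr_def by (rule X_htpy[OF assms(1)])
  have c10: "homotopic_with (\<lambda>k. \<forall>\<sigma>. \<sigma> permutes A \<longrightarrow>
           (\<forall>t\<in>topspace Y. k (act_real (Reg A) \<sigma> t) = act_real (Reg A) \<sigma> (k t)))
         Y Y (Fr \<circ> Hr) id"
    unfolding Y_def Hr_eq Fr_def by (rule Y_htpy[OF assms(1)])
  show ?thesis using c1 c2 c3 c4 c5 c6 c7 c8 c9 c10 by blast
qed

end
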